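(* If $G$ is a countable group with exactly $2$ ends, then $G$ is finitely generated. Consequently $G$ contains an infinite cyclic subgroup of finite index.
   Context: For a countable group $G$ equipped with a proper left-invariant metric (balls finite, $d(gh_1,gh_2)=d(h_1,h_2)$), the number of ends of $G$ is the cardinality of $CF(G)\setminus G$, where for a proper metric space $X$, $CF(X)$ is the compactification induced by all continuous glacially oscillating functions $X\to[0,1]$. A glacial scale on $X$ is a sequence $\mathcal S=\{(K_i,n_i)\}_{i\ge1}$, $K_i$ bounded, $n_i\in\mathbb N$, such that for every bounded $K$ and $r>0$ there is $i$ with $K\subset K_i$, $n_i>r$; an $\mathcal S$-chain is a finite sequence $x_1,\dots,x_n$ with, for each $i\le n-1$, some $m$ with $x_i,x_{i+1}\notin K_m$ and $d(x_i,x_{i+1})\le n_m$; $f$ is glacially oscillating if for every $\epsilon>0$ there is a glacial scale $\mathcal S$ with $|f(x_1)-f(x_n)|<\epsilon$ for all $\mathcal S$-chains. Equivalently, the number of ends of an infinite $G$ is the supremum of $n$ such that $G$ contains $n$ pairwise disjoint infinite almost invariant subsets ($A$ is almost invariant if $A\,\Delta\,(A g)$ is finite for all $g\in G$). For finitely generated groups this agrees with the classical number of ends (of a Cayley graph). *)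

theory Defs
  imports "HOL-Analysis.Analysis" "HOL-Algebra.Coset" "HOL-Algebra.Generated_Groups"
begin

definition proper_metric_on :: "'a set \<Rightarrow> ('a \<Rightarrow> 'a \<Rightarrow> real) \<Rightarrow> bool" where
  "proper_metric_on X d \<longleftrightarrow>
     (\<forall>x\<in>X. \<forall>y\<in>X. 0 \<le> d x y \<and> (d x y = 0 \<longleftrightarrow> x = y) \<and> d x y = d y x) \<and>
     (\<forall>x\<in>X. \<forall>y\<in>X. \<forall>z\<in>X. d x z \<le> d x y + d y z) \<and>
     (\<forall>x\<in>X. \<forall>r. finite {y\<in>X. d x y \<le> r})"

definition left_invariant_metric :: "('a, 'b) monoid_scheme \<Rightarrow> ('a \<Rightarrow> 'a \<Rightarrow> real) \<Rightarrow> bool" where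
  "left_invariant_metric G d \<longleftrightarrow>
     (\<forall>g\<in>carrier G. \<forall>h1\<in>carrier G. \<forall>h2\<in>carrier G.
        d (g \<otimes>\<^bsub>G\<^esub> h1) (g \<otimes>\<^bsub>G\<^esub> h2) = d h1 h2)"

definition mbounded :: "'a set \<Rightarrow> ('a \<Rightarrow> 'a \<Rightarrow> real) \<Rightarrow> 'a set \<Rightarrow> bool" where
  "mbounded X d K \<longleftrightarrow> K \<subseteq> X \<and> (K = {} \<or> (\<exists>x\<in>X. \<exists>r. \<forall>y\<in>K. d x y \<le> r))"

definition glacial_scale :: "'a set \<Rightarrow> ('a \<Rightarrow> 'a \<Rightarrow> real) \<Rightarrow> (nat \<Rightarrow> 'a set \<times> nat) \<Rightarrow> bool" where
  "glacial_scale X d S \<longleftrightarrow>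
     (\<forall>i. mbounded X d (fst (S i))) \<and>
     (\<forall>K r. mbounded X d K \<and> r > 0 \<longrightarrow> (\<exists>i. K \<subseteq> fst (S i) \<and> real (snd (S i)) > r))"

definition scale_chain :: "'a set \<Rightarrow> ('a \<Rightarrow> 'a \<Rightarrow> real) \<Rightarrow> (nat \<Rightarrow> 'a set \<times> nat) \<Rightarrow> 'a list \<Rightarrow> bool" where
  "scale_chain X d S xs \<longleftrightarrow> xs \<noteq> [] \<and> set xs \<subseteq> X \<and>
     (\<forall>i. Suc i < length xs \<longrightarrow>
        (\<exists>m. xs ! i \<notin> fst (S m) \<and> xs ! Suc i \<notin> fst (S m) \<and>
             d (xs ! i) (xs ! Suc i) \<le> real (snd (S m))))"

definition glacially_oscillating :: "'a set \<Rightarrow> ('a \<Rightarrow> 'a \<Rightarrow> real) \<Rightarrow> ('a \<Rightarrow> real) \<Rightarrow> bool" where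
  "glacially_oscillating X d f \<longleftrightarrow>
     (\<forall>\<epsilon>>0. \<exists>S. glacial_scale X d S \<and>
        (\<forall>xs. scale_chain X d S xs \<longrightarrow> \<bar>f (hd xs) - f (last xs)\<bar> < \<epsilon>))"

definition mcontinuous_on :: "'a set \<Rightarrow> ('a \<Rightarrow> 'a \<Rightarrow> real) \<Rightarrow> ('a \<Rightarrow> real) \<Rightarrow> bool" where
  "mcontinuous_on X d f \<longleftrightarrow>
     (\<forall>x\<in>X. \<forall>\<epsilon>>0. \<exists>\<delta>>0. \<forall>y\<in>X. d x y < \<delta> \<longrightarrow> \<bar>f x - f y\<bar> < \<epsilon>)"

definition CGO :: "'a set \<Rightarrow> ('a \<Rightarrow> 'a \<Rightarrow> real) \<Rightarrow> ('a \<Rightarrow> real) set" where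
  "CGO X d = {f \<in> extensional X. f ` X \<subseteq> {0..1} \<and> mcontinuous_on X d f \<and> glacially_oscillating X d f}"

definition ev_embed :: "('a \<Rightarrow> real) set \<Rightarrow> 'a \<Rightarrow> (('a \<Rightarrow> real) \<Rightarrow> real)" where
  "ev_embed F x = restrict (\<lambda>f. f x) F"

definition CF :: "'a set \<Rightarrow> ('a \<Rightarrow> 'a \<Rightarrow> real) \<Rightarrow> (('a \<Rightarrow> real) \<Rightarrow> real) set" where
  "CF X d = (product_topology (\<lambda>f. top_of_set {0..1::real}) (CGO X d))
              closure_of (ev_embed (CGO X d) ` X)"

definition ends_set :: "'a set \<Rightarrow> ('a \<Rightarrow> 'a \<Rightarrow> real) \<Rightarrow> (('a \<Rightarrow> real) \<Rightarrow> real) set" where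
  "ends_set X d = CF X d - ev_embed (CGO X d) ` X"

end

theory Submission
  imports Defs
begin

definition ai :: "('a, 'b) monoid_scheme \<Rightarrow> 'a set \<Rightarrow> bool" where
  "ai G A \<longleftrightarrow> A \<subseteq> carrier G \<and>
     (\<forall>h\<in>carrier G. finite {x \<in> carrier G. (x \<in> A) \<noteq> (x \<otimes>\<^bsub>G\<^esub> h \<in> A)})"

definition noThree :: "('a, 'b) monoid_scheme \<Rightarrow> bool" where
  "noThree G \<longleftrightarrow> \<not> (\<exists>A1 A2 A3. ai G A1 \<and> ai G A2 \<and> ai G A3 \<and> infinite A1 \<and> infinite A2 \<and> infinite A3
      \<and> A1 \<inter> A2 = {} \<and> A1 \<inter> A3 = {} \<and> A2 \<inter> A3 = {})"

definition rel :: "'a set \<Rightarrow> 'a set \<Rightarrow> int" where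
  "rel P Q = int (card (P - Q)) - int (card (Q - P))"

definition fd :: "'a set \<Rightarrow> 'a set \<Rightarrow> bool" where
  "fd P Q \<longleftrightarrow> finite (P - Q) \<and> finite (Q - P)"

lemma rel_via:
  assumes "finite U" "P - Q \<subseteq> U" "Q - P \<subseteq> U"
  shows "rel P Q = int (card (P \<inter> U)) - int (card (Q \<inter> U))"
proof -
  have e1: "P \<inter> U = (P \<inter> Q \<inter> U) \<union> (P - Q)" using assms by blast
  have e2: "Q \<inter> U = (P \<inter> Q \<inter> U) \<union> (Q - P)" using assms by blast
  have f: "finite (P \<inter> Q \<inter> U)" "finite (P - Q)" "finite (Q - P)"
    using assms finite_subset by auto
  have "card (P \<inter> U) = card (P \<inter> Q \<inter> U) + card (P - Q)"
    unfolding e1 by (rule card_Un_disjoint) (use f in auto)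
  moreover have "card (Q \<inter> U) = card (P \<inter> Q \<inter> U) + card (Q - P)"
    unfolding e2 by (rule card_Un_disjoint) (use f in auto)
  ultimately show ?thesis unfolding rel_def by simp
qed

lemma rel_trans:
  assumes "fd P Q" "fd Q R"
  shows "rel P R = rel P Q + rel Q R"
proof -
  define U where "U = (P - Q) \<union> (Q - P) \<union> (Q - R) \<union> (R - Q)"
  have fU: "finite U" using assms unfolding fd_def U_def by auto
  have "rel P R = int (card (P \<inter> U)) - int (card (R \<inter> U))"
    by (rule rel_via[OF fU]) (auto simp: U_def)
  moreover have "rel P Q = int (card (P \<inter> U)) - int (card (Q \<inter> U))"
    by (rule rel_via[OF fU]) (auto simp: U_def)
  moreover have "rel Q R = int (card (Q \<inter> U)) - int (card (R \<inter> U))"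
    by (rule rel_via[OF fU]) (auto simp: U_def)
  ultimately show ?thesis by simp
qed

lemma fd_trans: "fd P Q \<Longrightarrow> fd Q R \<Longrightarrow> fd P R"
proof -
  assume a: "fd P Q" "fd Q R"
  have "P - R \<subseteq> (P - Q) \<union> (Q - R)" "R - P \<subseteq> (R - Q) \<union> (Q - P)" by blast+
  thus "fd P R" using a unfolding fd_def by (meson finite_Un finite_subset)
qed

lemma rel_compl:
  assumes "P \<subseteq> X" "Q \<subseteq> X"
  shows "rel (X - P) (X - Q) = - rel P Q"
proof -
  have "(X - P) - (X - Q) = Q - P" "(X - Q) - (X - P) = P - Q" using assms by auto
  thus ?thesis unfolding rel_def by simp
qed

lemma fd_compl:
  assumes "P \<subseteq> X" "Q \<subseteq> X" "fd P Q"
  shows "fd (X - P) (X - Q)"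
proof -
  have "(X - P) - (X - Q) = Q - P" "(X - Q) - (X - P) = P - Q" using assms by auto
  thus ?thesis using assms(3) unfolding fd_def by simp
qed

lemma rel_image:
  assumes "inj_on f (P \<union> Q)"
  shows "rel (f ` P) (f ` Q) = rel P Q"
proof -
  have "f ` P - f ` Q = f ` (P - Q)" "f ` Q - f ` P = f ` (Q - P)"
    using assms unfolding inj_on_def by blast+
  moreover have "card (f ` (P - Q)) = card (P - Q)" "card (f ` (Q - P)) = card (Q - P)"
    by (rule card_image, rule inj_on_subset[OF assms], blast)+
  ultimately show ?thesis unfolding rel_def by simp
qed

lemma fd_image:
  assumes "inj_on f (P \<union> Q)" "fd P Q"
  shows "fd (f ` P) (f ` Q)"
proof -
  have "f ` P - f ` Q = f ` (P - Q)" "f ` Q - f ` P = f ` (Q - P)"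
    using assms unfolding inj_on_def by blast+
  thus ?thesis using assms(2) unfolding fd_def by simp
qed

lemma int_ivt:
  fixes p :: "int \<Rightarrow> bool"
  assumes "a \<le> b" "p a \<noteq> p b"
  shows "\<exists>k. a \<le> k \<and> k < b \<and> p k \<noteq> p (k + 1)"
proof -
  have "\<forall>a. a + int n = b \<longrightarrow> p a \<noteq> p b \<longrightarrow> (\<exists>k. a \<le> k \<and> k < b \<and> p k \<noteq> p (k + 1))" for n
  proof (induction n)
    case 0 then show ?case by auto
  next
    case (Suc n)
    show ?case
    proof (intro allI impI)
      fix a assume a: "a + int (Suc n) = b" "p a \<noteq> p b"
      show "\<exists>k. a \<le> k \<and> k < b \<and> p k \<noteq> p (k + 1)"
      proof (cases "p a = p (a + 1)")
        case True
        have "a + 1 + int n = b" using a(1) by simp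
        moreover have "p (a + 1) \<noteq> p b" using True a(2) by simp
        ultimately obtain k where "a + 1 \<le> k" "k < b" "p k \<noteq> p (k + 1)"
          using Suc.IH by blast
        then show ?thesis by (intro exI[of _ k]) simp
      next
        case False then show ?thesis using a by (intro exI[of _ a]) auto
      qed
    qed
  qed
  from this[of "nat (b - a)"] assms show ?thesis by simp
qed

lemma int_telescope:
  fixes F :: "int \<Rightarrow> int"
  shows "(\<Sum>k\<in>{a..<a + int n}. F k - F (k + 1)) = F a - F (a + int n)"
proof (induction n)
  case 0 then show ?case by simp
next
  case (Suc n)
  have "{a..<a + int (Suc n)} = insert (a + int n) {a..<a + int n}" by auto
  then show ?case using Suc by (simp add: algebra_simps)
qed

locale gm = group G for G :: "('a, 'b) monoid_scheme" (structure) +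
  fixes d :: "'a \<Rightarrow> 'a \<Rightarrow> real"
  assumes pm: "proper_metric_on (carrier G) d"
    and li: "left_invariant_metric G d"
begin

abbreviation "X \<equiv> carrier G"

definition lt :: "'a \<Rightarrow> 'a set \<Rightarrow> 'a set" where
  "lt g A = (\<lambda>x. g \<otimes> x) ` A"

definition bad :: "'a set \<Rightarrow> 'a \<Rightarrow> 'a set" where
  "bad A h = {x \<in> X. (x \<in> A) \<noteq> (x \<otimes> h \<in> A)}"

lemma mi1: "a \<in> X \<Longrightarrow> b \<in> X \<Longrightarrow> a \<otimes> (inv a \<otimes> b) = b"
  by (simp add: m_assoc[symmetric])
lemma mi2: "a \<in> X \<Longrightarrow> b \<in> X \<Longrightarrow> inv a \<otimes> (a \<otimes> b) = b"
  by (simp add: m_assoc[symmetric])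
lemma mi3: "a \<in> X \<Longrightarrow> b \<in> X \<Longrightarrow> (b \<otimes> a) \<otimes> inv a = b"
  by (simp add: m_assoc)
lemma mi4: "a \<in> X \<Longrightarrow> b \<in> X \<Longrightarrow> (b \<otimes> inv a) \<otimes> a = b"
  by (simp add: m_assoc)

lemma d_sym: "x \<in> X \<Longrightarrow> y \<in> X \<Longrightarrow> d x y = d y x"
  using pm unfolding proper_metric_on_def by blast

lemma d_nonneg: "x \<in> X \<Longrightarrow> y \<in> X \<Longrightarrow> 0 \<le> d x y"
  using pm unfolding proper_metric_on_def by blast

lemma d_zero: "x \<in> X \<Longrightarrow> y \<in> X \<Longrightarrow> d x y = 0 \<longleftrightarrow> x = y"
  using pm unfolding proper_metric_on_def by blast

lemma d_tri: "x \<in> X \<Longrightarrow> y \<in> X \<Longrightarrow> z \<in> X \<Longrightarrow> d x z \<le> d x y + d y z"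
  using pm unfolding proper_metric_on_def by blast

lemma ball_finite: "x \<in> X \<Longrightarrow> finite {y \<in> X. d x y \<le> r}"
  using pm unfolding proper_metric_on_def by blast

lemma d_li: "g \<in> X \<Longrightarrow> x \<in> X \<Longrightarrow> y \<in> X \<Longrightarrow> d (g \<otimes> x) (g \<otimes> y) = d x y"
  using li unfolding left_invariant_metric_def by blast

lemma d_mult: "x \<in> X \<Longrightarrow> h \<in> X \<Longrightarrow> d x (x \<otimes> h) = d \<one> h"
  using d_li[of x \<one> h] by simp

lemma d_inv: "s \<in> X \<Longrightarrow> d \<one> (inv s) = d \<one> s"
  using d_li[of s \<one> "inv s"] d_sym[of s \<one>] by simp

lemma lt_sub: "g \<in> X \<Longrightarrow> A \<subseteq> X \<Longrightarrow> lt g A \<subseteq> X"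
  unfolding lt_def by auto

lemma lt_mem: "g \<in> X \<Longrightarrow> A \<subseteq> X \<Longrightarrow> x \<in> X \<Longrightarrow> x \<in> lt g A \<longleftrightarrow> inv g \<otimes> x \<in> A"
  unfolding lt_def
proof
  assume "g \<in> X" "A \<subseteq> X" "x \<in> X" "x \<in> (\<otimes>) g ` A"
  then obtain a where "a \<in> A" "x = g \<otimes> a" by blast
  then show "inv g \<otimes> x \<in> A" using \<open>g \<in> X\<close> \<open>A \<subseteq> X\<close> by (auto simp: m_assoc[symmetric])
next
  assume a: "g \<in> X" "A \<subseteq> X" "x \<in> X" "inv g \<otimes> x \<in> A"
  have "x = g \<otimes> (inv g \<otimes> x)" using a by (simp add: m_assoc[symmetric])
  then show "x \<in> (\<otimes>) g ` A" using a(4) by blast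
qed

lemma lt_inj: "g \<in> X \<Longrightarrow> inj_on (\<lambda>x. g \<otimes> x) X"
  by (auto simp: inj_on_def)

lemma lt_compl: "g \<in> X \<Longrightarrow> A \<subseteq> X \<Longrightarrow> lt g (X - A) = X - lt g A"
  using lt_mem[of g A] lt_mem[of g "X - A"] lt_sub[of g A] lt_sub[of g "X - A"]
  by auto

lemma lt_mult: "g \<in> X \<Longrightarrow> h \<in> X \<Longrightarrow> A \<subseteq> X \<Longrightarrow> lt g (lt h A) = lt (g \<otimes> h) A"
  unfolding lt_def image_image by (intro image_cong) (auto simp: m_assoc subsetD)

lemma lt_card: "g \<in> X \<Longrightarrow> A \<subseteq> X \<Longrightarrow> card (lt g A) = card A"
  unfolding lt_def by (rule card_image) (meson inj_on_subset lt_inj)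

lemma lt_infinite: "g \<in> X \<Longrightarrow> A \<subseteq> X \<Longrightarrow> infinite A \<Longrightarrow> infinite (lt g A)"
  unfolding lt_def using finite_imageD inj_on_subset lt_inj by metis

lemma ai_alt: "ai G A \<longleftrightarrow> A \<subseteq> X \<and> (\<forall>h\<in>X. finite (bad A h))"
  unfolding ai_def bad_def by simp

lemma ai_compl: "ai G A \<Longrightarrow> ai G (X - A)"
proof -
  assume a: "ai G A"
  have "bad (X - A) h = bad A h" if "h \<in> X" for h
    using that unfolding bad_def by auto
  thus ?thesis using a unfolding ai_alt by auto
qed

lemma ai_Int: "ai G A \<Longrightarrow> ai G B \<Longrightarrow> ai G (A \<inter> B)"
proof -
  assume a: "ai G A" "ai G B"
  have "bad (A \<inter> B) h \<subseteq> bad A h \<union> bad B h" for h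
    unfolding bad_def by auto
  thus ?thesis using a unfolding ai_alt by (meson finite_Un finite_subset le_infI1)
qed

lemma ai_lt: "g \<in> X \<Longrightarrow> ai G A \<Longrightarrow> ai G (lt g A)"
proof -
  assume g: "g \<in> X" and a: "ai G A"
  have AX: "A \<subseteq> X" using a ai_alt by blast
  have "bad (lt g A) h \<subseteq> (\<lambda>y. g \<otimes> y) ` bad A h" if h: "h \<in> X" for h
  proof
    fix x assume x: "x \<in> bad (lt g A) h"
    hence xX: "x \<in> X" unfolding bad_def by blast
    have "x = g \<otimes> (inv g \<otimes> x)" using g xX by (simp add: m_assoc[symmetric])
    moreover have "inv g \<otimes> x \<in> bad A h"
      using x g h xX AX lt_mem[of g A x] lt_mem[of g A "x \<otimes> h"] unfolding bad_def
      by (auto simp: m_assoc)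
    ultimately show "x \<in> (\<lambda>y. g \<otimes> y) ` bad A h" by blast
  qed
  thus ?thesis using a g AX lt_sub unfolding ai_alt by (meson finite_imageI finite_subset)
qed

lemma ai_finite: "finite A \<Longrightarrow> A \<subseteq> X \<Longrightarrow> ai G A"
proof -
  assume f: "finite A" and AX: "A \<subseteq> X"
  have "bad A h \<subseteq> A \<union> (\<lambda>a. a \<otimes> inv h) ` A" if h: "h \<in> X" for h
  proof
    fix x assume x: "x \<in> bad A h"
    show "x \<in> A \<union> (\<lambda>a. a \<otimes> inv h) ` A"
    proof (cases "x \<in> A")
      case False
      hence "x \<otimes> h \<in> A" using x unfolding bad_def by blast
      moreover have "x = (x \<otimes> h) \<otimes> inv h" using h x unfolding bad_def by (simp add: m_assoc)
      ultimately show ?thesis by blast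
    qed simp
  qed
  thus ?thesis using f AX unfolding ai_alt by (meson finite_Un finite_imageI finite_subset)
qed

lemma lemmaF:
  assumes a: "ai G A" and F: "finite F" "F \<subseteq> X"
  shows "finite {g \<in> X. \<exists>f\<in>F. \<exists>f'\<in>F. g \<otimes> f \<in> A \<and> g \<otimes> f' \<notin> A}"
proof -
  have "{g \<in> X. \<exists>f\<in>F. \<exists>f'\<in>F. g \<otimes> f \<in> A \<and> g \<otimes> f' \<notin> A}
        \<subseteq> (\<Union>f\<in>F. \<Union>f'\<in>F. (\<lambda>x. x \<otimes> inv f) ` bad A (inv f \<otimes> f'))"
  proof
    fix g assume "g \<in> {g \<in> X. \<exists>f\<in>F. \<exists>f'\<in>F. g \<otimes> f \<in> A \<and> g \<otimes> f' \<notin> A}"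
    then obtain f f' where g: "g \<in> X" "f \<in> F" "f' \<in> F" "g \<otimes> f \<in> A" "g \<otimes> f' \<notin> A" by blast
    have fX: "f \<in> X" "f' \<in> X" using g F by auto
    have "(g \<otimes> f) \<otimes> (inv f \<otimes> f') = g \<otimes> f'" using g fX by (simp add: m_assoc mi1)
    hence "g \<otimes> f \<in> bad A (inv f \<otimes> f')" using g fX unfolding bad_def by auto
    moreover have "g = (g \<otimes> f) \<otimes> inv f" using g fX by (simp add: mi3)
    ultimately show "g \<in> (\<Union>f\<in>F. \<Union>f'\<in>F. (\<lambda>x. x \<otimes> inv f) ` bad A (inv f \<otimes> f'))"
      using g by blast
  qed
  moreover have "finite (\<Union>f\<in>F. \<Union>f'\<in>F. (\<lambda>x. x \<otimes> inv f) ` bad A (inv f \<otimes> f'))"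
    using F a unfolding ai_alt by (intro finite_UN_I finite_imageI) (auto simp: subsetD)
  ultimately show ?thesis by (rule finite_subset)
qed

end

context gm begin

lemma ai_sub: "ai G A \<Longrightarrow> A \<subseteq> X" unfolding ai_alt by blast

lemma split3:
  assumes nt: "noThree G" and a: "ai G A" "ai G B" and inf: "infinite A" "infinite (X - A)"
  shows "finite (A \<inter> B) \<or> finite (A - B)"
proof (rule ccontr)
  assume "\<not> ?thesis"
  moreover have "A - B = A \<inter> (X - B)" using ai_sub[OF a(1)] by blast
  ultimately have i: "infinite (A \<inter> B)" "infinite (A \<inter> (X - B))" by simp_all
  have "ai G (A \<inter> B)" "ai G (A \<inter> (X - B))" "ai G (X - A)"
    using a by (auto intro: ai_Int ai_compl)
  moreover have "(A \<inter> B) \<inter> (A \<inter> (X - B)) = {}" "(A \<inter> B) \<inter> (X - A) = {}" "(A \<inter> (X - B)) \<inter> (X - A) = {}"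
    by auto
  ultimately show False using nt i inf(2) unfolding noThree_def by blast
qed

lemma dich:
  assumes nt: "noThree G" and a: "ai G A" and inf: "infinite A" "infinite (X - A)" and g: "g \<in> X"
  shows "(finite (A - lt g A) \<and> finite (lt g A - A)) \<or> (finite (A \<inter> lt g A) \<and> finite ((X - A) - lt g A))"
proof -
  have AX: "A \<subseteq> X" using ai_sub[OF a] .
  have aig: "ai G (lt g A)" using ai_lt[OF g a] .
  have ginf: "infinite (lt g A)" using lt_infinite[OF g AX inf(1)] .
  have gcinf: "infinite (X - lt g A)"
    using lt_infinite[OF g _ inf(2)] lt_compl[OF g AX] by simp
  have gX: "lt g A \<subseteq> X" using lt_sub[OF g AX] .
  have s1: "finite (A \<inter> lt g A) \<or> finite (A - lt g A)" using split3[OF nt a aig inf] .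
  have s2: "finite ((X - A) \<inter> lt g A) \<or> finite ((X - A) - lt g A)"
  proof -
    have "X - (X - A) = A" using AX by blast
    hence "infinite (X - (X - A))" using inf(1) by simp
    thus ?thesis using split3[OF nt ai_compl[OF a] aig inf(2)] by blast
  qed
  have c1: "\<not> (finite (A - lt g A) \<and> finite ((X - A) - lt g A))"
  proof
    assume "finite (A - lt g A) \<and> finite ((X - A) - lt g A)"
    moreover have "X - lt g A = (A - lt g A) \<union> ((X - A) - lt g A)" using AX by blast
    ultimately show False using gcinf by simp
  qed
  have c2: "\<not> (finite (A \<inter> lt g A) \<and> finite ((X - A) \<inter> lt g A))"
  proof
    assume "finite (A \<inter> lt g A) \<and> finite ((X - A) \<inter> lt g A)"
    moreover have "lt g A = (A \<inter> lt g A) \<union> ((X - A) \<inter> lt g A)" using gX by blast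
    ultimately show False using ginf by (metis finite_Un)
  qed
  have e: "lt g A - A = (X - A) \<inter> lt g A" using gX by blast
  show ?thesis
  proof (cases "finite (A - lt g A)")
    case True
    hence "finite ((X - A) \<inter> lt g A)" using s2 c1 by blast
    thus ?thesis using True e by simp
  next
    case False
    hence "finite (A \<inter> lt g A)" using s1 by blast
    moreover hence "finite ((X - A) - lt g A)" using s2 c2 by blast
    ultimately show ?thesis by simp
  qed
qed

definition bd :: "real \<Rightarrow> 'a set \<Rightarrow> 'a set" where
  "bd r Z = {x \<in> Z. \<exists>y\<in>X. y \<notin> Z \<and> d x y \<le> r}"

lemma bd_finite:
  assumes a: "ai G Z" shows "finite (bd r Z)"
proof -
  have ZX: "Z \<subseteq> X" using ai_sub[OF a] .
  have "bd r Z \<subseteq> (\<Union>s\<in>{s \<in> X. d \<one> s \<le> r}. bad Z s)"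
  proof
    fix x assume "x \<in> bd r Z"
    then obtain y where xy: "x \<in> Z" "y \<in> X" "y \<notin> Z" "d x y \<le> r" unfolding bd_def by blast
    have xX: "x \<in> X" using xy ZX by blast
    define s where "s = inv x \<otimes> y"
    have sX: "s \<in> X" using xX xy unfolding s_def by simp
    have ys: "y = x \<otimes> s" unfolding s_def using xX xy by (simp add: mi1)
    have "d \<one> s \<le> r" using d_mult[OF xX sX] xy ys by simp
    moreover have "x \<in> bad Z s" unfolding bad_def using xy xX ys by simp
    ultimately show "x \<in> (\<Union>s\<in>{s \<in> X. d \<one> s \<le> r}. bad Z s)" using sX by blast
  qed
  moreover have "finite (\<Union>s\<in>{s \<in> X. d \<one> s \<le> r}. bad Z s)"
    using ball_finite[of \<one> r] a unfolding ai_alt by auto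
  ultimately show ?thesis by (rule finite_subset)
qed

lemma bd_sub: "bd r Z \<subseteq> Z" unfolding bd_def by blast

end

context gm begin

abbreviation "Kr r \<equiv> generate G {s \<in> X. d \<one> s \<le> r}"

lemma Kr_sub: "Kr r \<subseteq> X"
  using generate_in_carrier[of "{s \<in> X. d \<one> s \<le> r}"] by blast

lemma comp_bound:
  assumes K: "infinite (Kr r)" and E: "finite E" "E \<subseteq> X"
  shows "\<exists>C. \<forall>Y. finite Y \<longrightarrow> Y \<subseteq> X \<longrightarrow> (\<forall>x\<in>Y. \<forall>y\<in>X. y \<notin> Y \<and> d x y \<le> r \<longrightarrow> x \<in> E)
            \<longrightarrow> card Y \<le> C"
proof -
  define R where "R u v \<longleftrightarrow> u \<in> X \<and> v \<in> X \<and> u \<notin> E \<and> v \<notin> E \<and> d u v \<le> r" for u v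
  define comp where "comp u = {v. R\<^sup>*\<^sup>* u v}" for u
  define NB where "NB = {v \<in> X. v \<notin> E \<and> (\<exists>e\<in>E. d e v \<le> r)}"
  define FC where "FC = {n \<in> NB. finite (comp n)}"
  define C where "C = card E + (\<Sum>n\<in>FC. card (comp n))"
  have Rsym: "R u v \<Longrightarrow> R v u" for u v unfolding R_def using d_sym by auto
  have rtsym: "R\<^sup>*\<^sup>* u v \<Longrightarrow> R\<^sup>*\<^sup>* v u" for u v
  proof (induction rule: rtranclp.induct)
    case (rtrancl_refl a) then show ?case by simp
  next
    case (rtrancl_into_rtrancl a b c)
    then show ?case using Rsym converse_rtranclp_into_rtranclp by metis
  qed
  have memb: "R\<^sup>*\<^sup>* x v \<Longrightarrow> x \<in> X \<Longrightarrow> x \<notin> E \<Longrightarrow> v \<in> X \<and> v \<notin> E" for x v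
    by (induction rule: rtranclp.induct) (auto simp: R_def)
  have NBfin: "finite NB"
  proof -
    have "NB \<subseteq> (\<Union>e\<in>E. {y \<in> X. d e y \<le> r})" unfolding NB_def by blast
    moreover have "finite (\<Union>e\<in>E. {y \<in> X. d e y \<le> r})"
      using E ball_finite by blast
    ultimately show ?thesis by (rule finite_subset)
  qed
  have key: "\<exists>n\<in>NB. R\<^sup>*\<^sup>* x n" if x: "x \<in> X" "x \<notin> E" "finite (comp x)" for x
  proof (rule ccontr)
    assume nn: "\<not> (\<exists>n\<in>NB. R\<^sup>*\<^sup>* x n)"
    have step: "R\<^sup>*\<^sup>* x (x' \<otimes> s)" if x': "R\<^sup>*\<^sup>* x x'" and s: "s \<in> X" "d \<one> s \<le> r" for x' s
    proof -
      have x'X: "x' \<in> X" "x' \<notin> E" using memb[OF x' x(1,2)] by auto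
      have wX: "x' \<otimes> s \<in> X" using x'X s by simp
      have dw: "d x' (x' \<otimes> s) \<le> r" using d_mult[OF x'X(1) s(1)] s by simp
      have "x' \<otimes> s \<notin> E"
      proof
        assume "x' \<otimes> s \<in> E"
        hence "x' \<in> NB" unfolding NB_def using x'X dw d_sym[OF x'X(1) wX] by auto
        thus False using nn x' by blast
      qed
      hence "R x' (x' \<otimes> s)" unfolding R_def using x'X wX dw by simp
      with x' show ?thesis by (rule rtranclp.rtrancl_into_rtrancl)
    qed
    have gen: "\<forall>x'. R\<^sup>*\<^sup>* x x' \<longrightarrow> R\<^sup>*\<^sup>* x (x' \<otimes> k)" if k: "k \<in> Kr r" for k
      using k
    proof (induction rule: generate.induct)
      case one
      then show ?case using memb x by (auto simp: r_one)
    next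
      case (incl h)
      then show ?case using step by blast
    next
      case (inv h)
      then show ?case using step[of _ "inv h"] d_inv by auto
    next
      case (eng h1 h2)
      have h: "h1 \<in> X" "h2 \<in> X" using eng.hyps Kr_sub by auto
      show ?case
      proof (intro allI impI)
        fix x' assume x': "R\<^sup>*\<^sup>* x x'"
        have "x' \<in> X" using memb[OF x' x(1,2)] by simp
        hence "x' \<otimes> (h1 \<otimes> h2) = (x' \<otimes> h1) \<otimes> h2" using h by (simp add: m_assoc)
        thus "R\<^sup>*\<^sup>* x (x' \<otimes> (h1 \<otimes> h2))" using eng.IH x' by metis
      qed
    qed
    have "(\<lambda>k. x \<otimes> k) ` Kr r \<subseteq> comp x"
      unfolding comp_def using gen by blast
    moreover have "inj_on (\<lambda>k. x \<otimes> k) (Kr r)"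
      using inj_on_subset[OF lt_inj[OF x(1)] Kr_sub] .
    ultimately have "infinite (comp x)" using K
      by (meson finite_imageD finite_subset)
    thus False using x(3) by blast
  qed
  have FCfin: "finite FC" using NBfin unfolding FC_def by simp
  have "card Y \<le> C" if Y: "finite Y" "Y \<subseteq> X" "\<forall>x\<in>Y. \<forall>y\<in>X. y \<notin> Y \<and> d x y \<le> r \<longrightarrow> x \<in> E" for Y
  proof -
    have sub: "Y \<subseteq> E \<union> (\<Union>n\<in>FC. comp n)"
    proof
      fix x assume xY: "x \<in> Y"
      show "x \<in> E \<union> (\<Union>n\<in>FC. comp n)"
      proof (cases "x \<in> E")
        case False
        have xX: "x \<in> X" using xY Y by blast
        have inY: "R\<^sup>*\<^sup>* x v \<Longrightarrow> v \<in> Y" for v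
        proof (induction v rule: rtranclp_induct)
          case base then show ?case using xY by simp
        next
          case (step b c)
          then show ?case using Y(3) unfolding R_def by blast
        qed
        have cfin: "finite (comp x)"
          using finite_subset[OF _ Y(1), of "comp x"] inY unfolding comp_def by blast
        obtain n where n: "n \<in> NB" "R\<^sup>*\<^sup>* x n" using key[OF xX False cfin] by blast
        have "comp n \<subseteq> comp x" unfolding comp_def using n(2) by auto
        hence "n \<in> FC" using cfin n(1) finite_subset unfolding FC_def by blast
        moreover have "x \<in> comp n" unfolding comp_def using rtsym[OF n(2)] by simp
        ultimately show ?thesis by blast
      qed simp
    qed
    have fin2: "finite (\<Union>n\<in>FC. comp n)" using FCfin unfolding FC_def by blast
    have "card Y \<le> card (E \<union> (\<Union>n\<in>FC. comp n))"
      by (rule card_mono) (use fin2 E sub in auto)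
    also have "\<dots> \<le> card E + card (\<Union>n\<in>FC. comp n)" by (rule card_Un_le)
    also have "card (\<Union>n\<in>FC. comp n) \<le> (\<Sum>n\<in>FC. card (comp n))" by (rule card_UN_le[OF FCfin])
    finally show ?thesis unfolding C_def by simp
  qed
  thus ?thesis by blast
qed

end

context gm begin

lemma rel_lt: "g \<in> X \<Longrightarrow> P \<subseteq> X \<Longrightarrow> Q \<subseteq> X \<Longrightarrow> rel (lt g P) (lt g Q) = rel P Q"
  unfolding lt_def by (rule rel_image) (meson inj_on_subset lt_inj le_sup_iff)

lemma fd_lt: "g \<in> X \<Longrightarrow> P \<subseteq> X \<Longrightarrow> Q \<subseteq> X \<Longrightarrow> fd P Q \<Longrightarrow> fd (lt g P) (lt g Q)"
  unfolding lt_def by (rule fd_image) (meson inj_on_subset lt_inj le_sup_iff)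

lemma nlf_step:
  assumes nt: "noThree G" and a: "ai G A" and inf: "infinite A" "infinite (X - A)"
    and Cb: "\<forall>Y. finite Y \<longrightarrow> Y \<subseteq> X \<longrightarrow> (\<forall>x\<in>Y. \<forall>y\<in>X. y \<notin> Y \<and> d x y \<le> r \<longrightarrow> x \<in> bd r A \<union> bd r (X - A))
            \<longrightarrow> card Y \<le> C"
  shows "\<exists>g\<in>X. (fd (lt g A) A \<and> rel (lt g A) A < 0) \<or>
                (fd (lt g (X - A)) A \<and> rel (lt g (X - A)) A \<le> int C - int m)"
proof -
  define E where "E = bd r A \<union> bd r (X - A)"
  have AX: "A \<subseteq> X" using ai_sub[OF a] .
  have Efin: "finite E" unfolding E_def using bd_finite a ai_compl by auto
  have EX: "E \<subseteq> X" unfolding E_def using bd_sub AX by blast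
  obtain Fa where Fa: "Fa \<subseteq> A" "finite Fa" "card Fa = m" using infinite_arbitrarily_large[OF inf(1)] by blast
  obtain Fb where Fb: "Fb \<subseteq> X - A" "finite Fb" "card Fb = Suc C" using infinite_arbitrarily_large[OF inf(2)] by blast
  define F where "F = insert \<one> (E \<union> Fa \<union> Fb)"
  have Ffin: "finite F" unfolding F_def using Efin Fa Fb by simp
  have FX: "F \<subseteq> X" unfolding F_def using EX Fa Fb AX by auto
  define Ex where "Ex = {g \<in> X. \<exists>f\<in>F. \<exists>f'\<in>F. g \<otimes> f \<in> A \<and> g \<otimes> f' \<notin> A}"
  have "finite Ex" unfolding Ex_def using lemmaF[OF a Ffin FX] .
  hence "infinite (A - Ex)" using inf(1) by (meson Diff_infinite_finite)
  hence "A - Ex \<noteq> {}" by (metis finite.emptyI)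
  then obtain g where g: "g \<in> A" "g \<notin> Ex" by blast
  have gX: "g \<in> X" using g AX by blast
  have gF: "g \<otimes> f \<in> A" if "f \<in> F" for f
  proof (rule ccontr)
    assume "g \<otimes> f \<notin> A"
    moreover have "g \<otimes> \<one> \<in> A" using g gX by simp
    moreover have "\<one> \<in> F" unfolding F_def by simp
    ultimately have "g \<in> Ex" unfolding Ex_def using gX that by blast
    thus False using g by blast
  qed
  define gA where "gA = lt g A"
  have gAX: "gA \<subseteq> X" unfolding gA_def using lt_sub[OF gX AX] .
  have gAmem: "x \<in> gA \<longleftrightarrow> inv g \<otimes> x \<in> A" if "x \<in> X" for x
    unfolding gA_def using lt_mem[OF gX AX that] .
  define Y where "Y = (X - A) \<inter> gA"
  define Z where "Z = (X - A) - gA"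
  have EF: "E \<subseteq> F" unfolding F_def by blast
  have bdY: "\<forall>x\<in>Y. \<forall>y\<in>X. y \<notin> Y \<and> d x y \<le> r \<longrightarrow> x \<in> E"
  proof (intro ballI impI)
    fix x y assume x: "x \<in> Y" and y: "y \<in> X" and yd: "y \<notin> Y \<and> d x y \<le> r"
    have xX: "x \<in> X" using x Y_def by blast
    show "x \<in> E"
    proof (cases "y \<in> A")
      case True
      hence "x \<in> bd r (X - A)" unfolding bd_def using x y yd Y_def by blast
      thus ?thesis unfolding E_def by blast
    next
      case False
      hence ygA: "y \<notin> gA" using yd y Y_def by blast
      have x0: "inv g \<otimes> x \<in> A" using x xX gAmem Y_def by blast
      have y0: "inv g \<otimes> y \<notin> A" using ygA gAmem y by blast
      have "d (inv g \<otimes> x) (inv g \<otimes> y) \<le> r" using d_li[of "inv g" x y] gX xX y yd by simp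
      hence "inv g \<otimes> x \<in> bd r A" unfolding bd_def using x0 y0 gX y by auto
      hence "g \<otimes> (inv g \<otimes> x) \<in> A" using gF EF unfolding E_def by blast
      hence "x \<in> A" using mi1[OF gX xX] by simp
      thus ?thesis using x Y_def by blast
    qed
  qed
  have bdZ: "\<forall>x\<in>Z. \<forall>y\<in>X. y \<notin> Z \<and> d x y \<le> r \<longrightarrow> x \<in> E"
  proof (intro ballI impI)
    fix x y assume x: "x \<in> Z" and y: "y \<in> X" and yd: "y \<notin> Z \<and> d x y \<le> r"
    have xX: "x \<in> X" using x Z_def by blast
    show "x \<in> E"
    proof (cases "y \<in> A")
      case True
      hence "x \<in> bd r (X - A)" unfolding bd_def using x y yd Z_def by blast
      thus ?thesis unfolding E_def by blast
    next
      case False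
      hence ygA: "y \<in> gA" using yd y Z_def by blast
      have x0: "inv g \<otimes> x \<notin> A" using x xX gAmem Z_def by blast
      have y0: "inv g \<otimes> y \<in> A" using ygA gAmem y by blast
      have "d (inv g \<otimes> x) (inv g \<otimes> y) \<le> r" using d_li[of "inv g" x y] gX xX y yd by simp
      hence "inv g \<otimes> x \<in> bd r (X - A)" unfolding bd_def using x0 y0 gX y xX by auto
      hence "g \<otimes> (inv g \<otimes> x) \<in> A" using gF EF unfolding E_def by blast
      hence "x \<in> A" using mi1[OF gX xX] by simp
      thus ?thesis using x Z_def by blast
    qed
  qed
  have aiY: "ai G Y" unfolding Y_def gA_def using ai_Int[OF ai_compl[OF a] ai_lt[OF gX a]] .
  have aiZ: "ai G Z"
  proof -
    have "Z = (X - A) \<inter> (X - gA)" unfolding Z_def using gAX by blast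
    thus ?thesis unfolding gA_def using ai_Int[OF ai_compl[OF a] ai_compl[OF ai_lt[OF gX a]]] by simp
  qed
  have YZ: "Y \<union> Z = X - A" unfolding Y_def Z_def by blast
  have notboth: "\<not> (infinite Y \<and> infinite Z)"
  proof
    assume "infinite Y \<and> infinite Z"
    moreover have "A \<inter> Y = {}" "A \<inter> Z = {}" "Y \<inter> Z = {}" unfolding Y_def Z_def by auto
    ultimately show False using nt a aiY aiZ inf(1) unfolding noThree_def by blast
  qed
  have notnone: "\<not> (finite Y \<and> finite Z)" using YZ inf(2) by (metis finite_Un)
  have dc: "(finite (A - gA) \<and> finite (gA - A)) \<or> (finite (A \<inter> gA) \<and> finite ((X - A) - gA))"
    unfolding gA_def using dich[OF nt a inf gX] .
  have injg: "inj_on (\<lambda>x. g \<otimes> x) X" using lt_inj[OF gX] .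
  show ?thesis
  proof (cases "finite Y")
    case True
    have YX: "Y \<subseteq> X" unfolding Y_def by blast
    have cY: "card Y \<le> C" using spec[OF Cb, of Y] True YX bdY[unfolded E_def] by blast
    have Zi: "infinite Z" using notnone True by blast
    have f1: "finite (A - gA)" using dc Zi Z_def by blast
    have e1: "gA - A = Y" unfolding Y_def using gAX by blast
    have sub: "(\<lambda>x. g \<otimes> x) ` Fb \<subseteq> A - gA"
    proof
      fix z assume "z \<in> (\<lambda>x. g \<otimes> x) ` Fb"
      then obtain f where f: "f \<in> Fb" "z = g \<otimes> f" by blast
      have fX: "f \<in> X" "f \<notin> A" using f Fb by auto
      have "z \<in> A" using gF f unfolding F_def by blast
      moreover have "z \<notin> gA" using gAmem[of z] f fX gX by (simp add: mi2)
      ultimately show "z \<in> A - gA" by blast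
    qed
    have "card ((\<lambda>x. g \<otimes> x) ` Fb) = Suc C"
      using Fb card_image inj_on_subset[OF injg] by (metis Diff_subset order_trans)
    hence "Suc C \<le> card (A - gA)" using card_mono[OF f1 sub] by simp
    hence "rel gA A < 0" unfolding rel_def e1 using cY by simp
    moreover have "fd gA A" unfolding fd_def e1 using f1 True by simp
    ultimately have "fd (lt g A) A \<and> rel (lt g A) A < 0" unfolding gA_def by blast
    thus ?thesis using gX by blast
  next
    case False
    have Zf: "finite Z" using notboth False by blast
    have ZX: "Z \<subseteq> X" unfolding Z_def by blast
    have cZ: "card Z \<le> C" using spec[OF Cb, of Z] Zf ZX bdZ[unfolded E_def] by blast
    have e1: "gA - A = Y" unfolding Y_def using gAX by blast
    have f1: "finite (A \<inter> gA)" using dc False e1 by blast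
    have lc: "lt g (X - A) = X - gA" unfolding gA_def using lt_compl[OF gX AX] .
    have e2: "(X - gA) - A = Z" "A - (X - gA) = A \<inter> gA" unfolding Z_def using AX by blast+
    have sub: "(\<lambda>x. g \<otimes> x) ` Fa \<subseteq> A \<inter> gA"
    proof
      fix z assume "z \<in> (\<lambda>x. g \<otimes> x) ` Fa"
      then obtain f where f: "f \<in> Fa" "z = g \<otimes> f" by blast
      have fX: "f \<in> X" "f \<in> A" using f Fa AX by auto
      have "z \<in> A" using gF f unfolding F_def by blast
      moreover have "z \<in> gA" using gAmem[of z] f fX gX by (simp add: mi2)
      ultimately show "z \<in> A \<inter> gA" by blast
    qed
    have "card ((\<lambda>x. g \<otimes> x) ` Fa) = m"
      using Fa card_image inj_on_subset[OF injg] AX by (metis order_trans)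
    hence "m \<le> card (A \<inter> gA)" using card_mono[OF f1 sub] by simp
    hence "rel (X - gA) A \<le> int C - int m" unfolding rel_def e2 using cZ by simp
    moreover have "fd (X - gA) A" unfolding fd_def e2 using f1 Zf by simp
    ultimately have "fd (lt g (X - A)) A \<and> rel (lt g (X - A)) A \<le> int C - int m" using lc by simp
    thus ?thesis using gX by blast
  qed
qed

lemma nlf:
  assumes nt: "noThree G" and a: "ai G A" and inf: "infinite A" "infinite (X - A)"
    and K: "infinite (Kr r)"
  shows "\<exists>h\<in>X. fd (lt h A) A \<and> rel (lt h A) A \<noteq> 0"
proof -
  define E where "E = bd r A \<union> bd r (X - A)"
  have AX: "A \<subseteq> X" using ai_sub[OF a] .
  have Efin: "finite E" unfolding E_def using bd_finite a ai_compl by auto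
  have EX: "E \<subseteq> X" unfolding E_def using bd_sub AX by blast
  obtain C where Cb: "\<forall>Y. finite Y \<longrightarrow> Y \<subseteq> X \<longrightarrow> (\<forall>x\<in>Y. \<forall>y\<in>X. y \<notin> Y \<and> d x y \<le> r \<longrightarrow> x \<in> E)
            \<longrightarrow> card Y \<le> C" using comp_bound[OF K Efin EX] by blast
  note st = nlf_step[OF nt a inf Cb[unfolded E_def]]
  obtain g1 where g1: "g1 \<in> X" "(fd (lt g1 A) A \<and> rel (lt g1 A) A < 0) \<or>
                (fd (lt g1 (X - A)) A \<and> rel (lt g1 (X - A)) A \<le> int C - int 0)"
    using st[of 0] by blast
  show ?thesis
  proof (cases "fd (lt g1 A) A \<and> rel (lt g1 A) A < 0")
    case True then show ?thesis using g1 by force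
  next
    case False
    hence h1: "fd (lt g1 (X - A)) A" using g1 by blast
    define v1 where "v1 = rel (lt g1 (X - A)) A"
    define m where "m = nat (int C - v1 + 1)"
    obtain g2 where g2: "g2 \<in> X" "(fd (lt g2 A) A \<and> rel (lt g2 A) A < 0) \<or>
                (fd (lt g2 (X - A)) A \<and> rel (lt g2 (X - A)) A \<le> int C - int m)"
      using st[of m] by blast
    show ?thesis
    proof (cases "fd (lt g2 A) A \<and> rel (lt g2 A) A < 0")
      case True then show ?thesis using g2 by force
    next
      case False
      hence h2: "fd (lt g2 (X - A)) A" "rel (lt g2 (X - A)) A \<le> int C - int m" using g2 by blast+
      have v2: "rel (lt g2 (X - A)) A < v1" using h2(2) unfolding m_def by linarith
      have g1AX: "lt g1 A \<subseteq> X" using lt_sub[OF g1(1) AX] .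
      have lc1: "lt g1 (X - A) = X - lt g1 A" using lt_compl[OF g1(1) AX] .
      have ee: "X - (X - lt g1 A) = lt g1 A" using g1AX by blast
      have fd1: "fd (lt g1 A) (X - A)"
        using fd_compl[of "X - lt g1 A" X A, OF _ AX] h1 lc1 ee by simp
      have rel1: "rel (lt g1 A) (X - A) = - v1"
        using rel_compl[of "X - lt g1 A" X A, OF _ AX] lc1 ee unfolding v1_def by simp
      have fd2: "fd (lt g2 (lt g1 A)) (lt g2 (X - A))" using fd_lt[OF g2(1) g1AX _ fd1] by blast
      have rel2: "rel (lt g2 (lt g1 A)) (lt g2 (X - A)) = - v1"
        using rel_lt[OF g2(1) g1AX, of "X - A"] rel1 by simp
      have "rel (lt g2 (lt g1 A)) A = rel (lt g2 (lt g1 A)) (lt g2 (X - A)) + rel (lt g2 (X - A)) A"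
        by (rule rel_trans[OF fd2 h2(1)])
      hence "rel (lt g2 (lt g1 A)) A < 0" using rel2 v2 by simp
      moreover have "fd (lt g2 (lt g1 A)) A" using fd_trans[OF fd2 h2(1)] .
      moreover have "lt g2 (lt g1 A) = lt (g2 \<otimes> g1) A" using lt_mult[OF g2(1) g1(1) AX] .
      ultimately have "fd (lt (g2 \<otimes> g1) A) A \<and> rel (lt (g2 \<otimes> g1) A) A \<noteq> 0" by simp
      moreover have "g2 \<otimes> g1 \<in> X" using g1(1) g2(1) by simp
      ultimately show ?thesis by blast
    qed
  qed
qed

end

locale trl = gm G d for G :: "('a, 'b) monoid_scheme" (structure) and d +
  fixes A t
  assumes aiA: "ai G A" and tX: "t \<in> carrier G"
    and Dfin: "finite {z \<in> carrier G. (z \<in> A) \<noteq> (t \<otimes> z \<in> A)}"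
    and sumD: "(\<Sum>z\<in>{z \<in> carrier G. (z \<in> A) \<noteq> (t \<otimes> z \<in> A)}.
                  (if z \<in> A then 1 else 0) - (if t \<otimes> z \<in> A then 1 else (0::int))) \<noteq> 0"
begin

definition "D = {z \<in> X. (z \<in> A) \<noteq> (t \<otimes> z \<in> A)}"
definition "c z = (if z \<in> A then 1 else 0) - (if t \<otimes> z \<in> A then 1 else (0::int))"

lemma sumD': "sum c D \<noteq> 0" using sumD unfolding D_def c_def .
lemma Dfin': "finite D" using Dfin unfolding D_def .
lemma AX: "A \<subseteq> X" using ai_sub[OF aiA] .

lemma vanish:
  assumes W: "finite W" "W \<subseteq> X" "D \<subseteq> W" "(\<lambda>z. t \<otimes> z) ` W = W"
  shows "sum c D = 0"
proof -
  have "sum c W = sum c D"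
    by (rule sum.mono_neutral_right[OF W(1) W(3)]) (auto simp: D_def c_def dest: subsetD[OF W(2)])
  moreover have "sum c W = (\<Sum>z\<in>W. (if z \<in> A then 1 else (0::int))) - (\<Sum>z\<in>W. (if t \<otimes> z \<in> A then 1 else 0))"
    unfolding c_def by (rule sum_subtractf)
  moreover have "(\<Sum>z\<in>W. (if t \<otimes> z \<in> A then 1 else (0::int))) = (\<Sum>w\<in>(\<lambda>z. t \<otimes> z) ` W. (if w \<in> A then 1 else 0))"
    by (rule sum.reindex[symmetric, unfolded comp_def]) (rule inj_on_subset[OF lt_inj[OF tX] W(2)])
  ultimately show ?thesis using W(4) by simp
qed

lemma inf_order: "0 < n \<Longrightarrow> t [^] (n::nat) \<noteq> \<one>"
proof
  assume n: "0 < n" and tn: "t [^] n = \<one>"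
  define W where "W = (\<Union>j\<in>{..<n}. (\<lambda>z. t [^] j \<otimes> z) ` D)"
  have Wfin: "finite W" unfolding W_def using Dfin' by simp
  have DX: "D \<subseteq> X" unfolding D_def by blast
  have WX: "W \<subseteq> X" unfolding W_def using DX tX by auto
  have DW: "D \<subseteq> W"
  proof
    fix z assume "z \<in> D"
    moreover have "z = t [^] (0::nat) \<otimes> z" using \<open>z \<in> D\<close> DX by auto
    ultimately show "z \<in> W" unfolding W_def using n by blast
  qed
  have "(\<lambda>z. t \<otimes> z) ` W = W"
  proof
    show "(\<lambda>z. t \<otimes> z) ` W \<subseteq> W"
    proof
      fix w assume "w \<in> (\<lambda>z. t \<otimes> z) ` W"
      then obtain j z where jz: "j < n" "z \<in> D" "w = t \<otimes> (t [^] j \<otimes> z)" unfolding W_def by blast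
      have zX: "z \<in> X" using jz DX by blast
      have w: "w = t [^] (Suc j) \<otimes> z" using jz tX zX nat_pow_Suc2[OF tX, of j] by (simp add: m_assoc del: nat_pow_Suc)
      show "w \<in> W"
      proof (cases "Suc j < n")
        case True then show ?thesis using w jz unfolding W_def by blast
      next
        case False
        hence "Suc j = n" using jz by simp
        hence "w = t [^] (0::nat) \<otimes> z" using w tn zX by simp
        then show ?thesis using jz n unfolding W_def by blast
      qed
    qed
  next
    show "W \<subseteq> (\<lambda>z. t \<otimes> z) ` W"
    proof
      fix w assume "w \<in> W"
      then obtain j z where jz: "j < n" "z \<in> D" "w = t [^] j \<otimes> z" unfolding W_def by blast
      have zX: "z \<in> X" using jz DX by blast
      show "w \<in> (\<lambda>z. t \<otimes> z) ` W"
      proof (cases j)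
        case 0
        obtain m where m: "n = Suc m" using n by (cases n) auto
        have "w = z" using jz 0 zX by simp
        also have "z = t [^] n \<otimes> z" using tn zX by simp
        also have "\<dots> = t \<otimes> (t [^] m \<otimes> z)" using m tX zX nat_pow_Suc2[OF tX, of m] by (simp add: m_assoc del: nat_pow_Suc)
        finally have "w = t \<otimes> (t [^] m \<otimes> z)" .
        moreover have "t [^] m \<otimes> z \<in> W" using m jz unfolding W_def by blast
        ultimately show ?thesis by blast
      next
        case (Suc m)
        have "w = (t \<otimes> t [^] m) \<otimes> z" using jz(3) Suc nat_pow_Suc2[OF tX, of m] by (simp only:)
        also have "\<dots> = t \<otimes> (t [^] m \<otimes> z)" using tX zX by (simp add: m_assoc)
        finally have "w = t \<otimes> (t [^] m \<otimes> z)" .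
        moreover have "t [^] m \<otimes> z \<in> W" using Suc jz unfolding W_def by auto
        ultimately show ?thesis by blast
      qed
    qed
  qed
  hence "sum c D = 0" using vanish[OF Wfin WX DW] by simp
  thus False using sumD' by simp
qed

lemma pow_inj: "t [^] (i::int) = t [^] (j::int) \<Longrightarrow> i = j"
proof (rule ccontr)
  assume e: "t [^] i = t [^] j" and ne: "i \<noteq> j"
  have "t [^] i = t [^] (i - j) \<otimes> t [^] j" using int_pow_mult[OF tX, of "i - j" j] by simp
  hence one: "t [^] (i - j) = \<one>" using e tX by (metis int_pow_closed r_cancel_one)
  show False
  proof (cases "i - j > 0")
    case True
    hence "t [^] (int (nat (i - j))) = \<one>" using one by simp
    hence "t [^] (nat (i - j)) = \<one>" by (simp only: int_pow_int)
    thus False using inf_order[of "nat (i - j)"] True by simp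
  next
    case False
    hence pos: "j - i > 0" using ne by simp
    have "t [^] (j - i) = inv (t [^] (i - j))" using int_pow_neg[OF tX, of "i - j"] by simp
    hence "t [^] (int (nat (j - i))) = \<one>" using one pos by simp
    hence "t [^] (nat (j - i)) = \<one>" by (simp only: int_pow_int)
    thus False using inf_order[of "nat (j - i)"] pos by simp
  qed
qed

lemma pow_inj_on: "inj_on (\<lambda>k::int. t [^] k) S"
  using pow_inj by (auto simp: inj_on_def)

lemma pow_succ: "t [^] (k + 1 :: int) = t \<otimes> t [^] k"
  using int_pow_mult[OF tX, of 1 k] tX by (simp add: add.commute)

lemma pow_succ': "t [^] (k + 1 :: int) = t [^] k \<otimes> t"
  using int_pow_mult[OF tX, of k 1] tX by simp

definition "sq y k \<longleftrightarrow> t [^] (k::int) \<otimes> y \<in> A"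

lemma fin_bound: "finite (S :: int set) \<Longrightarrow> \<exists>M. \<forall>k. M < \<bar>k\<bar> \<longrightarrow> k \<notin> S"
proof -
  assume "finite S"
  hence "finite (abs ` S)" by simp
  define M where "M = Max (insert 0 (abs ` S))"
  have "\<forall>x\<in>abs ` S. x \<le> M" unfolding M_def using \<open>finite (abs ` S)\<close> by simp
  show ?thesis
  proof (intro exI[of _ M] allI impI)
    fix k assume "M < \<bar>k\<bar>"
    thus "k \<notin> S" using \<open>\<forall>x\<in>abs ` S. x \<le> M\<close> by force
  qed
qed

lemma L1: "finite {k. sq \<one> k \<noteq> sq \<one> (k + 1)}"
proof -
  define Ex where "Ex = {g \<in> X. \<exists>f\<in>{\<one>, t}. \<exists>f'\<in>{\<one>, t}. g \<otimes> f \<in> A \<and> g \<otimes> f' \<notin> A}"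
  have fe: "finite Ex" unfolding Ex_def by (rule lemmaF[OF aiA]) (use tX in auto)
  have "{k. sq \<one> k \<noteq> sq \<one> (k + 1)} \<subseteq> (\<lambda>k::int. t [^] k) -` Ex"
  proof
    fix k assume k: "k \<in> {k. sq \<one> k \<noteq> sq \<one> (k + 1)}"
    have X1: "t [^] k \<in> X" using tX by simp
    have "(t [^] k \<otimes> \<one> \<in> A) \<noteq> (t [^] k \<otimes> t \<in> A)"
      using k pow_succ'[of k] X1 tX unfolding sq_def by simp
    hence "t [^] k \<in> Ex" unfolding Ex_def using X1 by auto
    thus "k \<in> (\<lambda>k::int. t [^] k) -` Ex" by simp
  qed
  moreover have "finite ((\<lambda>k::int. t [^] k) -` Ex)"
    by (rule finite_vimageI[OF fe]) (rule pow_inj_on)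
  ultimately show ?thesis by (rule finite_subset)
qed

lemma L2: "y \<in> X \<Longrightarrow> finite {k. sq y k \<noteq> sq \<one> k}"
proof -
  assume yX: "y \<in> X"
  define Ex where "Ex = {g \<in> X. \<exists>f\<in>{\<one>, y}. \<exists>f'\<in>{\<one>, y}. g \<otimes> f \<in> A \<and> g \<otimes> f' \<notin> A}"
  have fe: "finite Ex" unfolding Ex_def by (rule lemmaF[OF aiA]) (use yX in auto)
  have "{k. sq y k \<noteq> sq \<one> k} \<subseteq> (\<lambda>k::int. t [^] k) -` Ex"
  proof
    fix k assume k: "k \<in> {k. sq y k \<noteq> sq \<one> k}"
    have X1: "t [^] k \<in> X" using tX by simp
    have "(t [^] k \<otimes> y \<in> A) \<noteq> (t [^] k \<otimes> \<one> \<in> A)"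
      using k X1 unfolding sq_def by simp
    hence "t [^] k \<in> Ex" unfolding Ex_def using X1 by auto
    thus "k \<in> (\<lambda>k::int. t [^] k) -` Ex" by simp
  qed
  moreover have "finite ((\<lambda>k::int. t [^] k) -` Ex)"
    by (rule finite_vimageI[OF fe]) (rule pow_inj_on)
  ultimately show ?thesis by (rule finite_subset)
qed

end

context trl begin

definition "ind b = (if b then 1 else (0::int))"

lemma ends_exist:
  "\<exists>M\<ge>0. (\<forall>k. M + 1 \<le> k \<longrightarrow> sq \<one> k = sq \<one> (M + 1)) \<and> (\<forall>k. k \<le> - M - 1 \<longrightarrow> sq \<one> k = sq \<one> (- M - 1))"
proof -
  obtain M0 where M0: "\<forall>k. M0 < \<bar>k\<bar> \<longrightarrow> k \<notin> {k. sq \<one> k \<noteq> sq \<one> (k + 1)}"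
    using fin_bound[OF L1] by blast
  define M where "M = max M0 0"
  have M0M: "M0 \<le> M" "0 \<le> M" unfolding M_def by simp_all
  have st: "M < \<bar>k\<bar> \<Longrightarrow> sq \<one> k = sq \<one> (k + 1)" for k using M0 M0M by force
  have up: "sq \<one> (M + 1 + int n) = sq \<one> (M + 1)" for n
  proof (induction n)
    case 0 then show ?case by simp
  next
    case (Suc n)
    have "M < \<bar>M + 1 + int n\<bar>" using M0M by simp
    hence "sq \<one> (M + 1 + int n) = sq \<one> (M + 1 + int n + 1)" by (rule st)
    then show ?case using Suc by (simp add: add.assoc)
  qed
  have down: "sq \<one> (- M - 1 - int n) = sq \<one> (- M - 1)" for n
  proof (induction n)
    case 0 then show ?case by simp
  next
    case (Suc n)
    have "M < \<bar>- M - 1 - int (Suc n)\<bar>" using M0M by simp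
    hence "sq \<one> (- M - 1 - int (Suc n)) = sq \<one> (- M - 1 - int (Suc n) + 1)" by (rule st)
    also have "- M - 1 - int (Suc n) + 1 = - M - 1 - int n" by simp
    also have "sq \<one> (- M - 1 - int n) = sq \<one> (- M - 1)" by (rule Suc.IH)
    finally show ?case .
  qed
  have "M \<ge> 0" unfolding M_def by simp
  moreover have "\<forall>k. M + 1 \<le> k \<longrightarrow> sq \<one> k = sq \<one> (M + 1)"
  proof (intro allI impI)
    fix k assume "M + 1 \<le> k"
    hence "k = M + 1 + int (nat (k - M - 1))" by simp
    thus "sq \<one> k = sq \<one> (M + 1)" using up by metis
  qed
  moreover have "\<forall>k. k \<le> - M - 1 \<longrightarrow> sq \<one> k = sq \<one> (- M - 1)"
  proof (intro allI impI)
    fix k assume "k \<le> - M - 1"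
    hence "k = - M - 1 - int (nat (- M - 1 - k))" by simp
    thus "sq \<one> k = sq \<one> (- M - 1)" using down by metis
  qed
  ultimately show ?thesis by blast
qed

definition "Mb = (SOME M. M \<ge> 0 \<and> (\<forall>k. M + 1 \<le> k \<longrightarrow> sq \<one> k = sq \<one> (M + 1)) \<and> (\<forall>k. k \<le> - M - 1 \<longrightarrow> sq \<one> k = sq \<one> (- M - 1)))"
definition "P = sq \<one> (Mb + 1)"
definition "Q = sq \<one> (- Mb - 1)"

lemma Mb: "Mb \<ge> 0" "\<And>k. Mb + 1 \<le> k \<Longrightarrow> sq \<one> k = P" "\<And>k. k \<le> - Mb - 1 \<Longrightarrow> sq \<one> k = Q"
  using someI_ex[OF ends_exist] unfolding Mb_def[symmetric] P_def Q_def by blast+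

lemma tail_y:
  assumes yX: "y \<in> X"
  shows "\<exists>N. \<forall>k. N < \<bar>k\<bar> \<longrightarrow> sq y k = (if 0 < k then P else Q)"
proof -
  obtain My where My: "\<forall>k. My < \<bar>k\<bar> \<longrightarrow> k \<notin> {k. sq y k \<noteq> sq \<one> k}"
    using fin_bound[OF L2[OF yX]] by blast
  define N where "N = max My Mb"
  have "sq y k = (if 0 < k then P else Q)" if k: "N < \<bar>k\<bar>" for k
  proof -
    have e: "sq y k = sq \<one> k" using My k unfolding N_def by force
    show ?thesis
    proof (cases "0 < k")
      case True
      hence "Mb + 1 \<le> k" using k unfolding N_def by simp
      then show ?thesis using e Mb(2) True by simp
    next
      case False
      hence "k \<le> - Mb - 1" using k unfolding N_def by simp
      then show ?thesis using e Mb(3) False by simp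
    qed
  qed
  thus ?thesis by blast
qed

lemma succ_mult: "y \<in> X \<Longrightarrow> t \<otimes> (t [^] (k::int) \<otimes> y) = t [^] (k + 1) \<otimes> y"
  using pow_succ[of k] tX by (simp add: m_assoc)

lemma cover:
  assumes PQ: "P \<noteq> Q" and yX: "y \<in> X"
  shows "\<exists>k::int. t [^] k \<otimes> y \<in> D"
proof -
  obtain N where N: "\<forall>k. N < \<bar>k\<bar> \<longrightarrow> sq y k = (if 0 < k then P else Q)" using tail_y[OF yX] by blast
  define L where "L = \<bar>N\<bar> + 1"
  have "sq y L = P" "sq y (- L) = Q" using N unfolding L_def by auto
  hence "sq y (- L) \<noteq> sq y L" using PQ by simp
  moreover have "- L \<le> L" unfolding L_def by simp
  ultimately obtain k where k: "sq y k \<noteq> sq y (k + 1)" using int_ivt[of "- L" L "sq y"] by metis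
  have "t [^] k \<otimes> y \<in> D"
    unfolding D_def using k tX yX succ_mult[OF yX, of k] unfolding sq_def by simp
  thus ?thesis by blast
qed

definition "orb z = {t [^] (k::int) \<otimes> z | k. True}"

lemma orb_self: "z \<in> X \<Longrightarrow> z \<in> orb z"
  unfolding orb_def by (rule CollectI, rule exI[of _ 0]) simp

lemma orb_shift: "y \<in> X \<Longrightarrow> orb (t [^] (k::int) \<otimes> y) = orb y"
proof -
  assume yX: "y \<in> X"
  have a: "t [^] j \<otimes> (t [^] k \<otimes> y) = t [^] (j + k) \<otimes> y" for j :: int
    using int_pow_mult[OF tX, of j k] tX yX by (simp add: m_assoc)
  show ?thesis
  proof
    show "orb (t [^] k \<otimes> y) \<subseteq> orb y" unfolding orb_def using a by blast
    show "orb y \<subseteq> orb (t [^] k \<otimes> y)"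
    proof
      fix x assume "x \<in> orb y"
      then obtain i :: int where "x = t [^] i \<otimes> y" unfolding orb_def by blast
      moreover have "t [^] i \<otimes> y = t [^] (i - k) \<otimes> (t [^] k \<otimes> y)" using a[of "i - k"] by simp
      ultimately show "x \<in> orb (t [^] k \<otimes> y)" unfolding orb_def by blast
    qed
  qed
qed

lemma orbit_sum_zero:
  assumes PQ: "P = Q" and yD: "y \<in> D"
  shows "sum c {x \<in> D. orb x = orb y} = 0"
proof -
  have yX: "y \<in> X" using yD unfolding D_def by blast
  have DX: "D \<subseteq> X" unfolding D_def by blast
  define I where "I = {k::int. t [^] k \<otimes> y \<in> D}"
  have injy: "inj (\<lambda>k::int. t [^] k \<otimes> y)"
  proof (rule injI)
    fix i j :: int assume "t [^] i \<otimes> y = t [^] j \<otimes> y"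
    hence "(t [^] i \<otimes> y) \<otimes> inv y = (t [^] j \<otimes> y) \<otimes> inv y" by simp
    hence "t [^] i = t [^] j" using mi3 yX tX by simp
    thus "i = j" by (rule pow_inj)
  qed
  have e: "{x \<in> D. orb x = orb y} = (\<lambda>k. t [^] k \<otimes> y) ` I"
  proof
    show "{x \<in> D. orb x = orb y} \<subseteq> (\<lambda>k. t [^] k \<otimes> y) ` I"
    proof
      fix x assume x: "x \<in> {x \<in> D. orb x = orb y}"
      hence "x \<in> orb y" using orb_self[of x] DX by blast
      then obtain k :: int where "x = t [^] k \<otimes> y" unfolding orb_def by blast
      thus "x \<in> (\<lambda>k. t [^] k \<otimes> y) ` I" using x unfolding I_def by blast
    qed
    show "(\<lambda>k. t [^] k \<otimes> y) ` I \<subseteq> {x \<in> D. orb x = orb y}"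
      unfolding I_def using orb_shift[OF yX] by blast
  qed
  have Ifin: "finite I" unfolding I_def
    using finite_vimageI[OF Dfin' injy] by (simp add: vimage_def)
  define f where "f k = ind (sq y k) - ind (sq y (k + 1))" for k
  have cf: "c (t [^] k \<otimes> y) = f k" for k :: int
    unfolding c_def f_def ind_def sq_def using succ_mult[OF yX, of k] by simp
  have "sum c {x \<in> D. orb x = orb y} = sum (\<lambda>k. c (t [^] k \<otimes> y)) I"
    unfolding e by (rule sum.reindex[unfolded comp_def]) (rule inj_on_subset[OF injy], simp)
  also have "\<dots> = sum f I" using cf by simp
  finally have s1: "sum c {x \<in> D. orb x = orb y} = sum f I" .
  obtain N0 where N0: "\<forall>k. N0 < \<bar>k\<bar> \<longrightarrow> k \<notin> I" using fin_bound[OF Ifin] by blast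
  obtain N where N: "\<forall>k. N < \<bar>k\<bar> \<longrightarrow> sq y k = (if 0 < k then P else Q)" using tail_y[OF yX] by blast
  define L where "L = \<bar>N0\<bar> + \<bar>N\<bar> + 1"
  have IL: "I \<subseteq> {- L..<L}"
  proof
    fix k assume "k \<in> I"
    hence "\<bar>k\<bar> \<le> N0" using N0 by force
    thus "k \<in> {- L..<L}" unfolding L_def by auto
  qed
  have "sum f I = sum f {- L..<L}"
  proof (rule sum.mono_neutral_left[OF _ IL])
    show "finite {- L..<L}" by simp
    show "\<forall>i\<in>{- L..<L} - I. f i = 0"
    proof
      fix i assume "i \<in> {- L..<L} - I"
      hence "t [^] i \<otimes> y \<notin> D" unfolding I_def by blast
      hence "sq y i = sq y (i + 1)" unfolding D_def sq_def using tX yX succ_mult[OF yX, of i] by simp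
      thus "f i = 0" unfolding f_def by simp
    qed
  qed
  also have "{- L..<L} = {- L..<- L + int (nat (2 * L))}" unfolding L_def by auto
  also have "sum f {- L..<- L + int (nat (2 * L))} = ind (sq y (- L)) - ind (sq y (- L + int (nat (2 * L))))"
    unfolding f_def by (rule int_telescope)
  also have "- L + int (nat (2 * L)) = L" unfolding L_def by simp
  also have "sq y (- L) = Q" using N unfolding L_def by auto
  also have "sq y L = P" using N unfolding L_def by auto
  finally show ?thesis using s1 PQ by simp
qed

lemma PQ_ne: "P \<noteq> Q"
proof
  assume PQ: "P = Q"
  have "sum c D = (\<Sum>B\<in>orb ` D. sum c {x \<in> D. orb x = B})"
    by (rule sum.group[symmetric]) (use Dfin' in auto)
  also have "\<dots> = 0" using orbit_sum_zero[OF PQ] by (intro sum.neutral) auto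
  finally show False using sumD' by simp
qed

end

context trl begin

lemma trl_final:
  "(\<exists>S. finite S \<and> S \<subseteq> X \<and> generate G S = X)
   \<and> (\<exists>a\<in>X. infinite (generate G {a}) \<and> finite (rcosets (generate G {a})))"
proof -
  have DX: "D \<subseteq> X" unfolding D_def by blast
  have cov: "\<exists>k::int. \<exists>z. z \<in> D \<and> y = inv (t [^] k) \<otimes> z" if yX: "y \<in> X" for y
  proof -
    obtain k :: int where k: "t [^] k \<otimes> y \<in> D" using cover[OF PQ_ne yX] by blast
    have "y = inv (t [^] k) \<otimes> (t [^] k \<otimes> y)" using mi2[of "t [^] k" y] tX yX by simp
    thus ?thesis using k by blast
  qed
  define H where "H = generate G {t}"
  have Hsub: "subgroup H G" unfolding H_def by (rule generate_is_subgroup) (use tX in simp)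
  have tH: "t \<in> H" unfolding H_def by (rule generate.incl) simp
  have powH: "t [^] (k::int) \<in> H" for k by (rule subgroup_int_pow_closed[OF Hsub tH])
  have HX: "H \<subseteq> X" using Hsub subgroup.subset by blast
  define S where "S = insert t D"
  have SX: "S \<subseteq> X" unfolding S_def using tX DX by blast
  have genS: "generate G S = X"
  proof
    show "generate G S \<subseteq> X" using generate_in_carrier[OF SX] by blast
    show "X \<subseteq> generate G S"
    proof
      fix y assume yX: "y \<in> X"
      obtain k :: int and z where kz: "z \<in> D" "y = inv (t [^] k) \<otimes> z" using cov[OF yX] by blast
      have sg: "subgroup (generate G S) G" by (rule generate_is_subgroup[OF SX])
      have tS: "t \<in> generate G S" unfolding S_def by (rule generate.incl) simp
      have zS: "z \<in> generate G S" unfolding S_def using kz by (intro generate.incl) simp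
      have "t [^] k \<in> generate G S" by (rule subgroup_int_pow_closed[OF sg tS])
      hence "inv (t [^] k) \<in> generate G S" by (rule subgroup.m_inv_closed[OF sg])
      hence "inv (t [^] k) \<otimes> z \<in> generate G S" using zS by (rule subgroup.m_closed[OF sg])
      thus "y \<in> generate G S" using kz(2) by simp
    qed
  qed
  have Sfin: "finite S" unfolding S_def using Dfin' by simp
  have Hrange: "H = range (\<lambda>k::int. t [^] k)" unfolding H_def using generate_pow[OF tX] by auto
  have Hinf: "infinite H"
  proof
    assume "finite H"
    hence "finite (UNIV :: int set)" using finite_imageD[of "\<lambda>k::int. t [^] k" UNIV] pow_inj_on Hrange by simp
    thus False by simp
  qed
  have "rcosets H \<subseteq> (\<lambda>z. H #> z) ` D"
  proof
    fix C assume "C \<in> rcosets H"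
    then obtain y where yX: "y \<in> X" and C: "C = H #> y" unfolding RCOSETS_def by blast
    obtain k :: int and z where kz: "z \<in> D" "y = inv (t [^] k) \<otimes> z" using cov[OF yX] by blast
    have iH: "inv (t [^] k) \<in> H" using powH by (rule subgroup.m_inv_closed[OF Hsub])
    have zX: "z \<in> X" using kz DX by blast
    have "H #> y = (H #> inv (t [^] k)) #> z" using coset_mult_assoc[OF HX _ zX, of "inv (t [^] k)"] kz tX by simp
    also have "H #> inv (t [^] k) = H" by (rule coset_join2) (use iH tX Hsub in auto)
    finally show "C \<in> (\<lambda>z. H #> z) ` D" using C kz by blast
  qed
  moreover have "finite ((\<lambda>z. H #> z) ` D)" using Dfin' by simp
  ultimately have "finite (rcosets H)" by (rule finite_subset)
  hence c2: "\<exists>a\<in>X. infinite (generate G {a}) \<and> finite (rcosets (generate G {a}))"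
    using Hinf tX unfolding H_def by blast
  have c1: "\<exists>S. finite S \<and> S \<subseteq> X \<and> generate G S = X"
    using Sfin SX genS by blast
  show ?thesis using c1 c2 by (rule conjI)
qed

end

context gm begin

definition "Kn (n::nat) = Kr (real n)"
definition "lev x = (LEAST n. x \<in> Kn n)"

lemma Kn_mono: "m \<le> n \<Longrightarrow> Kn m \<subseteq> Kn n"
  unfolding Kn_def by (rule mono_generate) auto

lemma Kn_subgroup: "subgroup (Kn n) G"
  unfolding Kn_def by (rule generate_is_subgroup) auto

lemma Kn_ex: "x \<in> X \<Longrightarrow> \<exists>n. x \<in> Kn n"
proof -
  assume xX: "x \<in> X"
  have "d \<one> x \<le> real (nat \<lceil>d \<one> x\<rceil>)" by linarith
  hence "x \<in> {s \<in> X. d \<one> s \<le> real (nat \<lceil>d \<one> x\<rceil>)}" using xX by simp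
  hence "x \<in> Kn (nat \<lceil>d \<one> x\<rceil>)" unfolding Kn_def by (rule generate.incl)
  thus ?thesis by blast
qed

lemma lev_in: "x \<in> X \<Longrightarrow> x \<in> Kn (lev x)"
  unfolding lev_def using Kn_ex by (rule LeastI_ex)

lemma lev_le: "x \<in> Kn n \<Longrightarrow> lev x \<le> n"
  unfolding lev_def by (rule Least_le)

lemma lev_mult:
  assumes hX: "h \<in> X" and xX: "x \<in> X" and lt: "lev h < lev x"
  shows "lev (x \<otimes> h) = lev x"
proof -
  have hK: "h \<in> Kn (lev x)" using lev_in[OF hX] Kn_mono[of "lev h" "lev x"] lt by auto
  have "x \<otimes> h \<in> Kn (lev x)" using subgroup.m_closed[OF Kn_subgroup lev_in[OF xX] hK] .
  hence le: "lev (x \<otimes> h) \<le> lev x" by (rule lev_le)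
  have "\<not> lev (x \<otimes> h) < lev x"
  proof
    assume lt2: "lev (x \<otimes> h) < lev x"
    define m where "m = max (lev (x \<otimes> h)) (lev h)"
    have a: "x \<otimes> h \<in> Kn m" using lev_in[of "x \<otimes> h"] Kn_mono[of "lev (x \<otimes> h)" m] xX hX unfolding m_def by auto
    have b: "h \<in> Kn m" using lev_in[OF hX] Kn_mono[of "lev h" m] unfolding m_def by auto
    have "(x \<otimes> h) \<otimes> inv h \<in> Kn m"
      using subgroup.m_closed[OF Kn_subgroup a subgroup.m_inv_closed[OF Kn_subgroup b]] .
    hence "x \<in> Kn m" using mi3[OF hX xX] by simp
    hence "lev x \<le> m" by (rule lev_le)
    thus False using lt lt2 unfolding m_def by simp
  qed
  thus ?thesis using le by simp
qed

lemma Kn_fin_sub: "\<forall>r. finite (Kr r) \<Longrightarrow> finite (Kn n)" unfolding Kn_def by blast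

lemma lf_three:
  assumes fin: "\<forall>r. finite (Kr r)" and infX: "infinite X"
  shows "\<not> noThree G"
proof -
  define Lam where "Lam = lev ` X"
  have Lam_inf: "infinite Lam"
  proof
    assume "finite Lam"
    define B where "B = Max Lam"
    have "X \<subseteq> Kn B"
    proof
      fix x assume xX: "x \<in> X"
      have "lev x \<le> B" unfolding B_def using \<open>finite Lam\<close> xX Lam_def by simp
      thus "x \<in> Kn B" using lev_in[OF xX] Kn_mono by blast
    qed
    thus False using infX Kn_fin_sub[OF fin] finite_subset by blast
  qed
  define e where "e = enumerate Lam"
  have e_in: "e j \<in> Lam" for j unfolding e_def using enumerate_in_set[OF Lam_inf] .
  have e_inj: "e i = e j \<Longrightarrow> i = j" for i j
    unfolding e_def using enumerate_mono_iff[OF Lam_inf] by (metis linorder_neqE_nat less_irrefl)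
  define B where "B i = {x \<in> X. \<exists>j. lev x = e j \<and> j mod 3 = i}" for i :: nat
  have Binf: "infinite (B i)" if i: "i < 3" for i
  proof
    assume fB: "finite (B i)"
    define J where "J = {j. j mod 3 = i}"
    have "e ` J \<subseteq> lev ` B i"
    proof
      fix v assume "v \<in> e ` J"
      then obtain j where j: "j \<in> J" "v = e j" by blast
      obtain x where x: "x \<in> X" "lev x = e j" using e_in[of j] unfolding Lam_def by force
      hence "x \<in> B i" unfolding B_def using j J_def by blast
      thus "v \<in> lev ` B i" using j x by force
    qed
    hence fe: "finite (e ` J)" using fB finite_subset by blast
    have "inj_on e J" using e_inj by (auto simp: inj_on_def)
    hence "finite J" using fe finite_imageD by blast
    moreover have "infinite J"
    proof -
      have "(\<lambda>m. 3 * m + i) ` UNIV \<subseteq> J" unfolding J_def using i by auto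
      moreover have "inj (\<lambda>m::nat. 3 * m + i)" by (auto simp: inj_on_def)
      ultimately show ?thesis using finite_imageD finite_subset infinite_UNIV_nat by metis
    qed
    ultimately show False by blast
  qed
  have Bai: "ai G (B i)" for i
  proof -
    have "bad (B i) h \<subseteq> Kn (lev h)" if hX: "h \<in> X" for h
    proof
      fix x assume x: "x \<in> bad (B i) h"
      hence xX: "x \<in> X" unfolding bad_def by blast
      show "x \<in> Kn (lev h)"
      proof (rule ccontr)
        assume "x \<notin> Kn (lev h)"
        hence "lev h < lev x" using lev_in[OF xX] Kn_mono[of "lev x" "lev h"] by (meson not_less subsetD)
        hence "lev (x \<otimes> h) = lev x" by (rule lev_mult[OF hX xX])
        hence "(x \<in> B i) = (x \<otimes> h \<in> B i)" unfolding B_def using xX hX by simp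
        thus False using x unfolding bad_def by blast
      qed
    qed
    moreover have "B i \<subseteq> X" unfolding B_def by blast
    ultimately show ?thesis unfolding ai_alt using Kn_fin_sub[OF fin] finite_subset by blast
  qed
  have disj: "B i \<inter> B i' = {}" if "i \<noteq> i'" for i i'
  proof -
    have "x \<notin> B i'" if "x \<in> B i" for x
    proof
      assume "x \<in> B i'"
      then obtain j' where "lev x = e j'" "j' mod 3 = i'" unfolding B_def by blast
      moreover obtain j where "lev x = e j" "j mod 3 = i" using \<open>x \<in> B i\<close> unfolding B_def by blast
      ultimately show False using e_inj \<open>i \<noteq> i'\<close> by metis
    qed
    thus ?thesis by blast
  qed
  show ?thesis unfolding noThree_def
    using Bai[of 0] Bai[of 1] Bai[of 2] Binf[of 0] Binf[of 1] Binf[of 2]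
      disj[of 0 1] disj[of 0 2] disj[of 1 2] by auto
qed

theorem group_main:
  assumes nt: "noThree G" and a: "ai G A" and inf: "infinite A" "infinite (X - A)"
  shows "(\<exists>S. finite S \<and> S \<subseteq> X \<and> generate G S = X)
   \<and> (\<exists>a\<in>X. infinite (generate G {a}) \<and> finite (rcosets (generate G {a})))"
proof (cases "\<exists>n::nat. infinite (Kr (real n))")
  case True
  then obtain n :: nat where K: "infinite (Kr (real n))" by blast
  obtain h where h: "h \<in> X" "fd (lt h A) A" "rel (lt h A) A \<noteq> 0" using nlf[OF nt a inf K] by blast
  define t where "t = inv h"
  have tX: "t \<in> X" using h unfolding t_def by simp
  have AX: "A \<subseteq> X" using ai_sub[OF a] .
  have hAX: "lt h A \<subseteq> X" using lt_sub[OF h(1) AX] .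
  have mem: "(t \<otimes> z \<in> A) = (z \<in> lt h A)" if "z \<in> X" for z
    using lt_mem[OF h(1) AX that] unfolding t_def by simp
  define Dd where "Dd = {z \<in> X. (z \<in> A) \<noteq> (t \<otimes> z \<in> A)}"
  have De: "Dd = (A - lt h A) \<union> (lt h A - A)" unfolding Dd_def using mem AX hAX by blast
  have Dfin: "finite Dd" unfolding De using h(2) unfolding fd_def by simp
  have "(\<Sum>z\<in>Dd. (if z \<in> A then 1 else 0) - (if t \<otimes> z \<in> A then 1 else (0::int)))
        = (\<Sum>z\<in>A - lt h A. (if z \<in> A then 1 else 0) - (if t \<otimes> z \<in> A then 1 else (0::int)))
        + (\<Sum>z\<in>lt h A - A. (if z \<in> A then 1 else 0) - (if t \<otimes> z \<in> A then 1 else (0::int)))"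
    unfolding De by (rule sum.union_disjoint) (use h(2) in \<open>auto simp: fd_def\<close>)
  also have "(\<Sum>z\<in>A - lt h A. (if z \<in> A then 1 else 0) - (if t \<otimes> z \<in> A then 1 else (0::int)))
      = (\<Sum>z\<in>A - lt h A. 1)"
    by (rule sum.cong) (use mem AX in auto)
  also have "(\<Sum>z\<in>lt h A - A. (if z \<in> A then 1 else 0) - (if t \<otimes> z \<in> A then 1 else (0::int)))
      = (\<Sum>z\<in>lt h A - A. -1)"
    by (rule sum.cong) (use mem hAX in auto)
  finally have "(\<Sum>z\<in>Dd. (if z \<in> A then 1 else 0) - (if t \<otimes> z \<in> A then 1 else (0::int))) = - rel (lt h A) A"
    unfolding rel_def by simp
  hence sD: "(\<Sum>z\<in>Dd. (if z \<in> A then 1 else 0) - (if t \<otimes> z \<in> A then 1 else (0::int))) \<noteq> 0" using h(3) by simp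
  interpret tr: trl G d A t
    by (unfold_locales) (use a tX Dfin sD in \<open>simp_all add: Dd_def\<close>)
  show ?thesis by (rule tr.trl_final)
next
  case False
  have fin: "\<forall>r. finite (Kr r)"
  proof
    fix r
    have "Kr r \<subseteq> Kr (real (nat \<lceil>r\<rceil>))" by (rule mono_generate) (auto, linarith)
    thus "finite (Kr r)" using False finite_subset by blast
  qed
  have "infinite X" using inf(1) ai_sub[OF a] finite_subset by blast
  thus ?thesis using lf_three[OF fin] nt by blast
qed

end

abbreviation tau :: "'a set \<Rightarrow> ('a \<Rightarrow> 'a \<Rightarrow> real) \<Rightarrow> (('a \<Rightarrow> real) \<Rightarrow> real) topology" where
  "tau X d \<equiv> product_topology (\<lambda>f. top_of_set {0..1::real}) (CGO X d)"

lemma topspace_tau: "topspace (tau X d) = (\<Pi>\<^sub>E f\<in>CGO X d. {0..1::real})"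
  by simp

lemma ev_in_topspace: "x \<in> X \<Longrightarrow> ev_embed (CGO X d) x \<in> topspace (tau X d)"
  by (auto simp: ev_embed_def CGO_def)

lemma ev_apply: "f \<in> CGO X d \<Longrightarrow> ev_embed (CGO X d) x f = f x"
  by (simp add: ev_embed_def)

lemma open_coord:
  assumes "f \<in> CGO X d" "open U"
  shows "openin (tau X d) {p \<in> topspace (tau X d). p f \<in> U}"
proof -
  have "openin (top_of_set {0..1::real}) ({0..1} \<inter> U)"
    using assms(2) by (auto simp: openin_open)
  from openin_continuous_map_preimage[OF continuous_map_product_projection[OF assms(1)] this]
  have "openin (tau X d) {p \<in> topspace (tau X d). p f \<in> {0..1} \<inter> U}" by simp
  moreover have "{p \<in> topspace (tau X d). p f \<in> {0..1} \<inter> U} = {p \<in> topspace (tau X d). p f \<in> U}"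
    using assms(1) by (auto simp: PiE_iff)
  ultimately show ?thesis by simp
qed

lemma t1_tau: "t1_space (tau X d)"
  by (simp add: t1_space_product_topology Hausdorff_imp_t1_space t1_space_subtopology)

lemma ends_limpt:
  assumes z: "z \<in> ends_set X d" and f: "f \<in> CGO X d" and U: "open U" "z f \<in> U"
  shows "infinite {x \<in> X. f x \<in> U}"
proof
  assume fin: "finite {x \<in> X. f x \<in> U}"
  define B where "B = {x \<in> X. f x \<in> U}"
  have "closedin (tau X d) (ev_embed (CGO X d) ` B)"
  proof -
    have "finite (ev_embed (CGO X d) ` B)" "ev_embed (CGO X d) ` B \<subseteq> topspace (tau X d)"
      subgoal using fin unfolding B_def by (rule finite_imageI)
      subgoal using ev_in_topspace[of _ X d] unfolding B_def by blast
      done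
    then show ?thesis using t1_tau[of X d] unfolding t1_space_closedin_finite by blast
  qed
  hence op: "openin (tau X d) ({p \<in> topspace (tau X d). p f \<in> U} - ev_embed (CGO X d) ` B)"
    using open_coord[OF f U(1)] by (rule openin_diff[rotated])
  have zc: "z \<in> CF X d" "z \<notin> ev_embed (CGO X d) ` X" using z unfolding ends_set_def by blast+
  hence ztop: "z \<in> topspace (tau X d)" using closure_of_subset_topspace[of "tau X d" "ev_embed (CGO X d) ` X"] unfolding CF_def by (meson subsetD)
  define T0 where "T0 = {p \<in> topspace (tau X d). p f \<in> U} - ev_embed (CGO X d) ` B"
  have zin: "z \<in> {p \<in> topspace (tau X d). p f \<in> U} - ev_embed (CGO X d) ` B"
  proof -
    have "z \<notin> ev_embed (CGO X d) ` B" using zc(2) unfolding B_def by blast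
    then show ?thesis using ztop U(2) by blast
  qed
  have all: "\<forall>T. z \<in> T \<and> openin (tau X d) T \<longrightarrow> (\<exists>y. y \<in> ev_embed (CGO X d) ` X \<and> y \<in> T)"
    using zc(1) unfolding CF_def in_closure_of by (rule conjunct2)
  have "\<exists>y. y \<in> ev_embed (CGO X d) ` X \<and> y \<in> T0"
    using mp[OF spec[OF all, of T0]] zin op unfolding T0_def by blast
  then obtain x where x: "x \<in> X" "ev_embed (CGO X d) x \<in> T0" by blast
  hence "f x \<in> U" using ev_apply[OF f, of x] unfolding T0_def by simp
  hence "x \<in> B" using x(1) B_def by simp
  thus False using x(2) unfolding T0_def by blast
qed

context gm begin

definition "indf B = (\<lambda>x\<in>X. if x \<in> B then 1 else (0::real))"

lemma disc: "x \<in> X \<Longrightarrow> \<exists>\<delta>>0. \<forall>y\<in>X. d x y < \<delta> \<longrightarrow> y = x"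
proof -
  assume xX: "x \<in> X"
  define S where "S = {y \<in> X. d x y \<le> 1} - {x}"
  have Sfin: "finite S" unfolding S_def using ball_finite[OF xX] by simp
  define \<delta> where "\<delta> = Min (insert 1 (d x ` S))"
  have pos: "\<delta> > 0" unfolding \<delta>_def using Sfin
  proof (subst Min_gr_iff)
    show "\<forall>a\<in>insert 1 (d x ` S). 0 < a"
      using d_nonneg[OF xX] d_zero[OF xX] unfolding S_def by (auto simp: less_le)
  qed auto
  have "y = x" if yX: "y \<in> X" and dy: "d x y < \<delta>" for y
  proof (rule ccontr)
    assume ne: "y \<noteq> x"
    have "\<delta> \<le> 1" unfolding \<delta>_def using Sfin by simp
    hence "y \<in> S" unfolding S_def using yX dy ne by simp
    hence "\<delta> \<le> d x y" unfolding \<delta>_def using Sfin by simp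
    thus False using dy by simp
  qed
  thus ?thesis using pos by blast
qed

lemma finite_mbounded: "finite K \<Longrightarrow> K \<subseteq> X \<Longrightarrow> mbounded X d K"
proof -
  assume K: "finite K" "K \<subseteq> X"
  have "\<forall>y\<in>K. d \<one> y \<le> (\<Sum>z\<in>K. d \<one> z)"
  proof
    fix y assume "y \<in> K"
    thus "d \<one> y \<le> (\<Sum>z\<in>K. d \<one> z)"
      using K d_nonneg by (intro member_le_sum) auto
  qed
  thus ?thesis unfolding mbounded_def using K by blast
qed

lemma mbounded_finite: "mbounded X d K \<Longrightarrow> finite K"
proof -
  assume m: "mbounded X d K"
  show ?thesis
  proof (cases "K = {}")
    case False
    then obtain x r where "x \<in> X" "\<forall>y\<in>K. d x y \<le> r" using m unfolding mbounded_def by blast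
    hence "K \<subseteq> {y \<in> X. d x y \<le> r}" using m unfolding mbounded_def by blast
    thus ?thesis using ball_finite[OF \<open>x \<in> X\<close>] finite_subset by blast
  qed simp
qed

lemma indf_CGO:
  assumes a: "ai G B"
  shows "indf B \<in> CGO X d"
proof -
  have ext: "indf B \<in> extensional X" unfolding indf_def by simp
  have img: "indf B ` X \<subseteq> {0..1}" unfolding indf_def by auto
  have cont: "mcontinuous_on X d (indf B)"
    unfolding mcontinuous_on_def
  proof (intro ballI allI impI)
    fix x :: 'a and \<epsilon> :: real assume xX: "x \<in> X" and e: "\<epsilon> > 0"
    obtain \<delta> where "\<delta> > 0" "\<forall>y\<in>X. d x y < \<delta> \<longrightarrow> y = x" using disc[OF xX] by blast
    thus "\<exists>\<delta>>0. \<forall>y\<in>X. d x y < \<delta> \<longrightarrow> \<bar>indf B x - indf B y\<bar> < \<epsilon>" using e by force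
  qed
  define Bd where "Bd i = {x \<in> X. \<exists>h\<in>X. d \<one> h \<le> real i \<and> x \<in> bad B h}" for i :: nat
  define Ki where "Ki i = {y \<in> X. d \<one> y \<le> real i} \<union> Bd i" for i :: nat
  define S where "S i = (Ki i, i)" for i
  have Kfin: "finite (Ki i)" for i
  proof -
    have "Bd i \<subseteq> (\<Union>h\<in>{h \<in> X. d \<one> h \<le> real i}. bad B h)" unfolding Bd_def by blast
    moreover have "finite (\<Union>h\<in>{h \<in> X. d \<one> h \<le> real i}. bad B h)"
      using ball_finite[of \<one> "real i"] a unfolding ai_alt by auto
    ultimately have "finite (Bd i)" by (rule finite_subset)
    thus ?thesis unfolding Ki_def using ball_finite[of \<one> "real i"] by simp
  qed
  have KX: "Ki i \<subseteq> X" for i unfolding Ki_def Bd_def by blast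
  have gs: "glacial_scale X d S"
    unfolding glacial_scale_def
  proof (intro conjI allI impI)
    fix i show "mbounded X d (fst (S i))" unfolding S_def using finite_mbounded[OF Kfin KX] by simp
  next
    fix K and r :: real assume Kr: "mbounded X d K \<and> 0 < r"
    obtain R where R: "\<forall>y\<in>K. d \<one> y \<le> R"
    proof (cases "K = {}")
      case True then show ?thesis using that by blast
    next
      case False
      then obtain x0 R0 where x0: "x0 \<in> X" "\<forall>y\<in>K. d x0 y \<le> R0" using Kr unfolding mbounded_def by blast
      have "\<forall>y\<in>K. d \<one> y \<le> d \<one> x0 + R0"
      proof
        fix y assume y: "y \<in> K"
        hence yX: "y \<in> X" using Kr unfolding mbounded_def by blast
        have "d \<one> y \<le> d \<one> x0 + d x0 y" using d_tri[of \<one> x0 y] x0 yX by simp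
        thus "d \<one> y \<le> d \<one> x0 + R0" using x0 y by force
      qed
      thus ?thesis using that by blast
    qed
    define i where "i = nat \<lceil>max R r\<rceil> + 1"
    have "K \<subseteq> Ki i"
    proof
      fix y assume y: "y \<in> K"
      hence yX: "y \<in> X" using Kr unfolding mbounded_def by blast
      have "d \<one> y \<le> real i" using R y unfolding i_def by (smt (verit, best) of_nat_1 of_nat_add real_nat_ceiling_ge)
      thus "y \<in> Ki i" unfolding Ki_def using yX by blast
    qed
    moreover have "real (snd (S i)) > r" unfolding S_def i_def by simp linarith
    ultimately show "\<exists>i. K \<subseteq> fst (S i) \<and> r < real (snd (S i))" unfolding S_def by auto
  qed
  have chain_const: "indf B (hd xs) = indf B (last xs)" if ch: "scale_chain X d S xs" for xs
  proof -
    have ne: "xs \<noteq> []" and sX: "set xs \<subseteq> X" using ch unfolding scale_chain_def by auto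
    have step: "(xs ! i \<in> B) = (xs ! Suc i \<in> B)" if i: "Suc i < length xs" for i
    proof -
      obtain m where m: "xs ! i \<notin> Ki m" "xs ! Suc i \<notin> Ki m" "d (xs ! i) (xs ! Suc i) \<le> real m"
        using ch i unfolding scale_chain_def S_def by auto
      define x where "x = xs ! i"
      define y where "y = xs ! Suc i"
      have xX: "x \<in> X" "y \<in> X" using sX i unfolding x_def y_def by (auto simp: subset_iff)
      define h where "h = inv x \<otimes> y"
      have hX: "h \<in> X" using xX unfolding h_def by simp
      have yh: "y = x \<otimes> h" unfolding h_def using xX mi1 by simp
      have "d \<one> h \<le> real m" using d_mult[OF xX(1) hX] m(3) yh unfolding x_def y_def by simp
      moreover have "bad B h \<subseteq> X" unfolding bad_def by blast
      ultimately have "x \<notin> bad B h" using m(1) hX unfolding Ki_def Bd_def x_def by blast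
      hence "(x \<in> B) = (x \<otimes> h \<in> B)" using xX unfolding bad_def by blast
      thus ?thesis using yh unfolding x_def y_def by simp
    qed
    have all: "(xs ! i \<in> B) = (xs ! 0 \<in> B)" if "i < length xs" for i
      using that
    proof (induction i)
      case 0 then show ?case by simp
    next
      case (Suc i) then show ?case using step[of i] by simp
    qed
    have "hd xs = xs ! 0" using ne by (simp add: hd_conv_nth)
    moreover have "last xs = xs ! (length xs - 1)" using ne by (simp add: last_conv_nth)
    moreover have "xs ! 0 \<in> X" "xs ! (length xs - 1) \<in> X" using ne sX by (auto simp: subset_iff)
    ultimately show ?thesis using all[of "length xs - 1"] ne unfolding indf_def by simp
  qed
  have "glacially_oscillating X d (indf B)"
    unfolding glacially_oscillating_def using gs chain_const by auto
  thus ?thesis unfolding CGO_def using ext img cont by blast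
qed

end

context gm begin

abbreviation "ev \<equiv> ev_embed (CGO X d)"

lemma indf_apply: "x \<in> X \<Longrightarrow> indf B x = (if x \<in> B then 1 else 0)"
  unfolding indf_def by simp

lemma ev_inj: "x \<in> X \<Longrightarrow> y \<in> X \<Longrightarrow> ev x = ev y \<Longrightarrow> x = y"
proof -
  assume xy: "x \<in> X" "y \<in> X" "ev x = ev y"
  have f: "indf {x} \<in> CGO X d" using indf_CGO[OF ai_finite[of "{x}"]] xy by simp
  have "ev x (indf {x}) = 1" using ev_apply[OF f, of x] indf_apply[of x "{x}"] xy(1) by simp
  moreover have "ev y (indf {x}) = indf {x} y" using ev_apply[OF f] .
  ultimately have "indf {x} y = 1" using xy(3) by metis
  hence "(if y \<in> {x} then 1 else 0) = (1::real)" using indf_apply[of y "{x}"] xy(2) by simp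
  thus "x = y" by (cases "y \<in> {x}") simp_all
qed

lemma compact_tau: "compact_space (tau X d)"
proof -
  have "compact_space (top_of_set {0..1::real})"
    by (rule compact_space_subtopology) (simp only: compactin_euclidean_iff compact_Icc)
  thus ?thesis unfolding compact_space_product_topology by blast
qed

lemma end_of_inf:
  assumes a: "ai G B" and inf: "infinite B"
  shows "\<exists>z\<in>ends_set X d. z (indf B) = 1 \<and> (\<forall>C. ai G C \<and> C \<inter> B = {} \<longrightarrow> z (indf C) = 0)"
proof -
  have BX: "B \<subseteq> X" using ai_sub[OF a] .
  define S where "S = ev ` B"
  have Sinf: "infinite S" unfolding S_def
  proof
    assume "finite (ev ` B)"
    moreover have "inj_on ev B" unfolding inj_on_def
    proof (intro ballI impI)
      fix x y assume "x \<in> B" "y \<in> B" "ev x = ev y"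
      thus "x = y" using ev_inj[of x y] BX by blast
    qed
    ultimately have "finite B" by (rule finite_imageD)
    thus False using inf by contradiction
  qed
  have Stop: "S \<subseteq> topspace (tau X d)" unfolding S_def
  proof
    fix p assume "p \<in> ev ` B"
    then obtain x where "x \<in> B" "p = ev x" by blast
    thus "p \<in> topspace (tau X d)" using ev_in_topspace[of x X d] BX by blast
  qed
  obtain z where z: "z \<in> (tau X d) derived_set_of S"
    using compact_space_imp_Bolzano_Weierstrass[OF compact_tau Sinf Stop] by blast
  have ztop: "z \<in> topspace (tau X d)" by (rule subsetD[OF derived_set_of_subset_topspace z])
  have zder: "\<forall>T. z \<in> T \<and> openin (tau X d) T \<longrightarrow> (\<exists>y. y \<noteq> z \<and> y \<in> S \<and> y \<in> T)"
    using z unfolding in_derived_set_of by (rule conjunct2)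
  have zCF: "z \<in> CF X d"
  proof -
    have "z \<in> (tau X d) closure_of S" by (rule subsetD[OF derived_set_of_subset_closure_of z])
    moreover have "(tau X d) closure_of S \<subseteq> (tau X d) closure_of (ev ` X)"
      unfolding S_def by (rule closure_of_mono, rule image_mono, rule BX)
    ultimately show ?thesis unfolding CF_def by (rule subsetD[rotated])
  qed
  have znot: "z \<notin> ev ` X"
  proof
    assume "z \<in> ev ` X"
    then obtain x where x: "x \<in> X" "z = ev x" by blast
    have f: "indf {x} \<in> CGO X d" using indf_CGO[OF ai_finite[of "{x}"]] x by simp
    define T where "T = {p \<in> topspace (tau X d). p (indf {x}) \<in> {1/2<..}}"
    have Top: "openin (tau X d) T" unfolding T_def by (rule open_coord[OF f]) simp
    have "z (indf {x}) = 1" using x(2) ev_apply[OF f, of x] indf_apply[OF x(1), of "{x}"] by simp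
    hence zT: "z \<in> T" unfolding T_def using ztop by simp
    obtain y where y: "y \<noteq> z" "y \<in> S" "y \<in> T" using mp[OF spec[OF zder, of T]] zT Top by blast
    then obtain b where b: "b \<in> B" "y = ev b" unfolding S_def by blast
    have bX: "b \<in> X" using b BX by blast
    have "y (indf {x}) > 1/2" using y(3) unfolding T_def by blast
    hence "indf {x} b > 1/2" using b(2) ev_apply[OF f, of b] by simp
    hence "(if b \<in> {x} then 1 else 0) > (1/2::real)" using indf_apply[OF bX, of "{x}"] by simp
    hence "b = x" by (cases "b \<in> {x}") simp_all
    hence "y = z" using b(2) x(2) by simp
    thus False using y(1) by contradiction
  qed
  have fB: "indf B \<in> CGO X d" using indf_CGO[OF a] .
  have z1: "z (indf B) = 1"
  proof (rule ccontr)
    assume ne: "z (indf B) \<noteq> 1"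
    define T where "T = {p \<in> topspace (tau X d). p (indf B) \<in> - {1}}"
    have Top: "openin (tau X d) T" unfolding T_def by (rule open_coord[OF fB]) (rule open_Compl, simp)
    have zT: "z \<in> T" unfolding T_def using ztop ne by simp
    obtain y where y: "y \<noteq> z" "y \<in> S" "y \<in> T" using mp[OF spec[OF zder, of T]] zT Top by blast
    then obtain b where b: "b \<in> B" "y = ev b" unfolding S_def by blast
    have bX: "b \<in> X" using b BX by blast
    have "y (indf B) \<noteq> 1" using y(3) unfolding T_def by blast
    hence "indf B b \<noteq> 1" using b(2) ev_apply[OF fB, of b] by simp
    thus False using indf_apply[OF bX] b by simp
  qed
  have z0: "z (indf C) = 0" if C: "ai G C" "C \<inter> B = {}" for C
  proof (rule ccontr)
    assume ne: "z (indf C) \<noteq> 0"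
    have fC: "indf C \<in> CGO X d" using indf_CGO[OF C(1)] .
    define T where "T = {p \<in> topspace (tau X d). p (indf C) \<in> - {0}}"
    have Top: "openin (tau X d) T" unfolding T_def by (rule open_coord[OF fC]) (rule open_Compl, simp)
    have zT: "z \<in> T" unfolding T_def using ztop ne by simp
    obtain y where y: "y \<noteq> z" "y \<in> S" "y \<in> T" using mp[OF spec[OF zder, of T]] zT Top by blast
    then obtain b where b: "b \<in> B" "y = ev b" unfolding S_def by blast
    have bX: "b \<in> X" using b BX by blast
    have "y (indf C) \<noteq> 0" using y(3) unfolding T_def by blast
    hence "indf C b \<noteq> 0" using b(2) ev_apply[OF fC, of b] by simp
    moreover have "b \<notin> C" using b(1) C(2) by blast
    ultimately show False using indf_apply[OF bX, of C] by simp
  qed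
  have "z \<in> ends_set X d" unfolding ends_set_def using zCF znot by blast
  thus ?thesis using z1 z0 by blast
qed

lemma noThree_of_card:
  assumes c: "card (ends_set X d) = 2"
  shows "noThree G"
  unfolding noThree_def
proof
  assume "\<exists>A1 A2 A3. ai G A1 \<and> ai G A2 \<and> ai G A3 \<and> infinite A1 \<and> infinite A2 \<and> infinite A3
      \<and> A1 \<inter> A2 = {} \<and> A1 \<inter> A3 = {} \<and> A2 \<inter> A3 = {}"
  then obtain A1 A2 A3 where A: "ai G A1" "ai G A2" "ai G A3" "infinite A1" "infinite A2" "infinite A3"
    "A1 \<inter> A2 = {}" "A1 \<inter> A3 = {}" "A2 \<inter> A3 = {}" by blast
  obtain z1 where z1: "z1 \<in> ends_set X d" "z1 (indf A1) = 1" "\<forall>C. ai G C \<and> C \<inter> A1 = {} \<longrightarrow> z1 (indf C) = 0"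
    using end_of_inf[OF A(1,4)] by blast
  obtain z2 where z2: "z2 \<in> ends_set X d" "z2 (indf A2) = 1" "\<forall>C. ai G C \<and> C \<inter> A2 = {} \<longrightarrow> z2 (indf C) = 0"
    using end_of_inf[OF A(2,5)] by blast
  obtain z3 where z3: "z3 \<in> ends_set X d" "z3 (indf A3) = 1" "\<forall>C. ai G C \<and> C \<inter> A3 = {} \<longrightarrow> z3 (indf C) = 0"
    using end_of_inf[OF A(3,6)] by blast
  have "z2 (indf A1) = 0" using z2(3) A(1,7) by blast
  hence n12: "z1 \<noteq> z2" using z1(2) by (metis zero_neq_one)
  have "z3 (indf A1) = 0" using z3(3) A(1,8) by blast
  hence n13: "z1 \<noteq> z3" using z1(2) by (metis zero_neq_one)
  have "z3 (indf A2) = 0" using z3(3) A(2,9) by blast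
  hence n23: "z2 \<noteq> z3" using z2(2) by (metis zero_neq_one)
  have fin: "finite (ends_set X d)" using c by (metis card.infinite zero_neq_numeral)
  have "card {z1, z2, z3} \<le> card (ends_set X d)"
    by (rule card_mono[OF fin]) (use z1 z2 z3 in blast)
  moreover have "card {z1, z2, z3} = 3" using n12 n13 n23 by simp
  ultimately show False using c by simp
qed

end

lemma chain_cons:
  assumes ch: "scale_chain X d S xs" and x: "x \<in> X" "x \<notin> fst (S m)" "hd xs \<notin> fst (S m)"
    "d x (hd xs) \<le> real (snd (S m))"
  shows "scale_chain X d S (x # xs)"
proof -
  have ne: "xs \<noteq> []" and sX: "set xs \<subseteq> X" using ch unfolding scale_chain_def by auto
  have st: "\<forall>i. Suc i < length xs \<longrightarrow>
        (\<exists>m. xs ! i \<notin> fst (S m) \<and> xs ! Suc i \<notin> fst (S m) \<and> d (xs ! i) (xs ! Suc i) \<le> real (snd (S m)))"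
    using ch unfolding scale_chain_def by blast
  have "\<exists>m. (x # xs) ! i \<notin> fst (S m) \<and> (x # xs) ! Suc i \<notin> fst (S m) \<and>
            d ((x # xs) ! i) ((x # xs) ! Suc i) \<le> real (snd (S m))" if i: "Suc i < length (x # xs)" for i
  proof (cases i)
    case 0
    have "(x # xs) ! Suc 0 = hd xs" using ne by (simp add: hd_conv_nth)
    then show ?thesis using 0 x by auto
  next
    case (Suc j)
    have "Suc j < length xs" using i Suc by simp
    then show ?thesis using st Suc by simp
  qed
  thus ?thesis unfolding scale_chain_def using sX x(1) by simp
qed

context gm begin

lemma exists_A:
  assumes c: "card (ends_set X d) = 2"
  shows "\<exists>A. ai G A \<and> infinite A \<and> infinite (X - A)"
proof -
  obtain p q where pq: "ends_set X d = {p, q}" "p \<noteq> q" using c card_2_iff by metis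
  have top: "z \<in> topspace (tau X d)" if "z \<in> ends_set X d" for z
  proof -
    have "z \<in> CF X d" using that unfolding ends_set_def by blast
    thus ?thesis unfolding CF_def by (rule subsetD[OF closure_of_subset_topspace])
  qed
  have "\<exists>f\<in>CGO X d. p f \<noteq> q f"
  proof (rule ccontr)
    assume "\<not> ?thesis"
    hence "\<And>f. f \<in> CGO X d \<Longrightarrow> p f = q f" by blast
    moreover have "p \<in> (\<Pi>\<^sub>E f\<in>CGO X d. {0..1::real})" "q \<in> (\<Pi>\<^sub>E f\<in>CGO X d. {0..1::real})"
      using top[of p] top[of q] pq(1) by simp_all
    ultimately have "p = q" using PiE_ext by metis
    thus False using pq(2) by contradiction
  qed
  then obtain f where f: "f \<in> CGO X d" "p f \<noteq> q f" by blast
  obtain lo hi where lh: "lo \<in> ends_set X d" "hi \<in> ends_set X d" "lo f < hi f"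
  proof (cases "p f < q f")
    case True then show ?thesis using that pq(1) by blast
  next
    case False then show ?thesis using that pq(1) f(2) by force
  qed
  define \<delta> where "\<delta> = (hi f - lo f) / 3"
  have dpos: "\<delta> > 0" unfolding \<delta>_def using lh by simp
  define a where "a = lo f + \<delta>"
  define b where "b = hi f - \<delta>"
  have go: "glacially_oscillating X d f" using f(1) unfolding CGO_def by blast
  obtain S where S: "glacial_scale X d S" "\<forall>xs. scale_chain X d S xs \<longrightarrow> \<bar>f (hd xs) - f (last xs)\<bar> < \<delta>"
    using go dpos unfolding glacially_oscillating_def by blast
  define A where "A = {x \<in> X. \<exists>xs. scale_chain X d S xs \<and> hd xs = x \<and> b \<le> f (last xs)}"
  have AX: "A \<subseteq> X" unfolding A_def by blast
  have single: "scale_chain X d S [x]" if "x \<in> X" for x unfolding scale_chain_def using that by simp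
  have Ainf: "infinite A"
  proof -
    have "hi f \<in> {b<..}" unfolding b_def using dpos by simp
    hence "infinite {x \<in> X. f x \<in> {b<..}}" by (rule ends_limpt[OF lh(2) f(1) open_greaterThan])
    moreover have "{x \<in> X. f x \<in> {b<..}} \<subseteq> A"
    proof
      fix x assume x: "x \<in> {x \<in> X. f x \<in> {b<..}}"
      hence "scale_chain X d S [x] \<and> hd [x] = x \<and> b \<le> f (last [x])" using single by auto
      thus "x \<in> A" unfolding A_def using x by blast
    qed
    ultimately show ?thesis using finite_subset by blast
  qed
  have Acinf: "infinite (X - A)"
  proof -
    have "lo f \<in> {..<a}" unfolding a_def using dpos by simp
    hence "infinite {x \<in> X. f x \<in> {..<a}}" by (rule ends_limpt[OF lh(1) f(1) open_lessThan])
    moreover have "{x \<in> X. f x \<in> {..<a}} \<subseteq> X - A"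
    proof
      fix x assume x: "x \<in> {x \<in> X. f x \<in> {..<a}}"
      have "x \<notin> A"
      proof
        assume "x \<in> A"
        then obtain xs where xs: "scale_chain X d S xs" "hd xs = x" "b \<le> f (last xs)" unfolding A_def by blast
        have "\<bar>f x - f (last xs)\<bar> < \<delta>" using S(2) xs by blast
        moreover have "f x < a" using x by simp
        moreover have "hi f - lo f = 3 * \<delta>" unfolding \<delta>_def by simp
        ultimately show False using xs(3) unfolding a_def b_def abs_less_iff by linarith
      qed
      thus "x \<in> X - A" using x by blast
    qed
    ultimately show ?thesis using finite_subset by blast
  qed
  have Aai: "ai G A" unfolding ai_alt
  proof (intro conjI ballI)
    show "A \<subseteq> X" by (rule AX)
  next
    fix h assume hX: "h \<in> X"
    have mb0: "mbounded X d {} \<and> 0 < \<bar>d \<one> h\<bar> + 1" unfolding mbounded_def by simp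
    have allK: "\<forall>K r. mbounded X d K \<and> r > 0 \<longrightarrow> (\<exists>i. K \<subseteq> fst (S i) \<and> real (snd (S i)) > r)"
      using S(1) unfolding glacial_scale_def by (rule conjunct2)
    have "\<exists>i. {} \<subseteq> fst (S i) \<and> real (snd (S i)) > \<bar>d \<one> h\<bar> + 1"
      using mp[OF spec[OF spec[OF allK, of "{}"], of "\<bar>d \<one> h\<bar> + 1"] mb0] .
    then obtain i where i: "real (snd (S i)) > \<bar>d \<one> h\<bar> + 1" by blast
    define K where "K = fst (S i)"
    have Kb: "mbounded X d K" using S(1) unfolding glacial_scale_def K_def by (rule conjE) (erule spec)
    have Kfin: "finite K" using mbounded_finite[OF Kb] .
    have dh: "d \<one> h \<le> real (snd (S i))" using i by linarith
    have "bad A h \<subseteq> K \<union> (\<lambda>y. y \<otimes> inv h) ` K"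
    proof
      fix x assume x: "x \<in> bad A h"
      have xX: "x \<in> X" using x unfolding bad_def by blast
      have xhX: "x \<otimes> h \<in> X" using xX hX by simp
      show "x \<in> K \<union> (\<lambda>y. y \<otimes> inv h) ` K"
      proof (rule ccontr)
        assume nk: "x \<notin> K \<union> (\<lambda>y. y \<otimes> inv h) ` K"
        hence xK: "x \<notin> K" by blast
        have xhK: "x \<otimes> h \<notin> K"
        proof
          assume "x \<otimes> h \<in> K"
          moreover have "x = (x \<otimes> h) \<otimes> inv h" using xX hX by (simp add: mi3)
          ultimately show False using nk by blast
        qed
        have d1: "d x (x \<otimes> h) \<le> real (snd (S i))" using d_mult[OF xX hX] dh by simp
        have d2: "d (x \<otimes> h) x \<le> real (snd (S i))" using d1 d_sym[OF xX xhX] by simp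
        have "(x \<in> A) = (x \<otimes> h \<in> A)"
        proof
          assume "x \<in> A"
          then obtain xs where xs: "scale_chain X d S xs" "hd xs = x" "b \<le> f (last xs)" unfolding A_def by blast
          have ne: "xs \<noteq> []" using xs(1) unfolding scale_chain_def by blast
          have "scale_chain X d S ((x \<otimes> h) # xs)"
            by (rule chain_cons[OF xs(1) xhX, of i]) (use xhK xK xs(2) d2 K_def in auto)
          moreover have "last ((x \<otimes> h) # xs) = last xs" using ne by simp
          moreover have "hd ((x \<otimes> h) # xs) = x \<otimes> h" by simp
          ultimately show "x \<otimes> h \<in> A" unfolding A_def using xhX xs(3) by auto
        next
          assume "x \<otimes> h \<in> A"
          then obtain xs where xs: "scale_chain X d S xs" "hd xs = x \<otimes> h" "b \<le> f (last xs)" unfolding A_def by blast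
          have ne: "xs \<noteq> []" using xs(1) unfolding scale_chain_def by blast
          have "scale_chain X d S (x # xs)"
            by (rule chain_cons[OF xs(1) xX, of i]) (use xhK xK xs(2) d1 K_def in auto)
          moreover have "last (x # xs) = last xs" using ne by simp
          moreover have "hd (x # xs) = x" by simp
          ultimately show "x \<in> A" unfolding A_def using xX xs(3) by auto
        qed
        thus False using x unfolding bad_def by blast
      qed
    qed
    moreover have "finite (K \<union> (\<lambda>y. y \<otimes> inv h) ` K)" using Kfin by simp
    ultimately show "finite (bad A h)" by (rule finite_subset)
  qed
  show ?thesis using Aai Ainf Acinf by blast
qed

end

theorem theorem5p12:
  fixes G :: "('a, 'b) monoid_scheme" and d :: "'a \<Rightarrow> 'a \<Rightarrow> real"
  assumes "group G"
    and "countable (carrier G)"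
    and "proper_metric_on (carrier G) d"
    and "left_invariant_metric G d"
    and "card (ends_set (carrier G) d) = 2"
  shows "(\<exists>S. finite S \<and> S \<subseteq> carrier G \<and> generate G S = carrier G)
       \<and> (\<exists>a\<in>carrier G. infinite (generate G {a}) \<and> finite (rcosets\<^bsub>G\<^esub> (generate G {a})))"
proof -
  interpret gm G d using assms(1,3,4) by (simp add: gm_def gm_axioms_def)
  obtain A where A: "ai G A" "infinite A" "infinite (carrier G - A)" using exists_A[OF assms(5)] by blast
  have nt: "noThree G" using noThree_of_card[OF assms(5)] .
  show ?thesis using group_main[OF nt A] .
qed

end
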